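(* With the notation of the context, let $\beta^*=\inf_{x\in\Delta}F(x)$, $\alpha^*=\inf_{x\in\Delta}G(x)$, let $x^*\in\Delta$ satisfy $F(x^* )=\beta^*$, and let $a^*,b^*,c^*\in(0,1)$ be such that $x^*(\psi)=a^*$ for $\psi$ of type 1, $x^*(\psi)=b^*$ for $\psi$ of type 2, 3 or 5, and $x^*(\psi)=c^*$ for $\psi$ of type 4. Then (i) $a^*=\dfrac{1}{(2n-1)\alpha_n+1}$, $b^*=\dfrac{(2n-1)(\alpha_n-1)}{(4n^2-4n-1)(2n-1)\alpha_n^2+2(2n^2-1)\alpha_n-(2n-1)}$, $c^*=\dfrac{2n-1}{2n-1+\alpha_n}$; (ii) $\beta^*=\alpha^*=\alpha_n$.
   Context: Fix an integer $n\ge2$ and free generators $\xi_1,\dots,\xi_n$ of a free group; throughout $i,j,k\in\{1,\dots,n\}$ and $t,s,p\in\{-1,+1\}$. Let $\Psi$ be the set of reduced words $\xi_i^{2t}$; $\xi_i^t\xi_j^{2s}$ ($i\ne j$); $\xi_i^t\xi_j^s\xi_k^p$ ($i\ne j$, $j\ne k$). Types: type 1 $=\xi_i^{2t}$; type 2 $=\xi_i^t\xi_j^{2s}$; type 3 $=\xi_i^t\xi_j^s\xi_i^t$; type 4 $=\xi_i^t\xi_j^s\xi_i^{-t}$; type 5 $=\xi_i^t\xi_j^s\xi_k^p$ with $i,j,k$ pairwise distinct. For a letter $\xi_a^x$ let $S(\xi_a^x)\subset\Psi$ be the set of words in $\Psi$ beginning with $\xi_a^x$, namely $\{\xi_a^{2x}\}\cup\{\xi_a^x\xi_j^{2s}\}\cup\{\xi_a^x\xi_j^s\xi_k^p\}$;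 for $a\ne b$ let $S(\xi_a^x\xi_b^y)=\{\xi_a^x\xi_b^{2y}\}\cup\{\xi_a^x\xi_b^y\xi_k^p: k\ne b\}$. A relation $r$ is a pair $(\psi_r,\Psi_r)$ with $\psi_r\in\Psi$, $\Psi_r\subseteq\Psi$; the relations considered are (indices $i_0\ne j_0$, in type 5 $i_0,j_0,k_0$ pairwise distinct, all signs arbitrary): 1a: $\psi_r=\xi_{i_0}^{2t_0}$, $\Psi_r=\Psi\setminus S(\xi_{i_0}^{t_0})$; 1b: $\psi_r=\xi_{i_0}^{2t_0}$, $\Psi_r=\Psi\setminus\{\xi_{i_0}^{t_0}\xi_{j_0}^{s_0}\xi_{i_0}^{t_0}\}$; 2a: $\psi_r=\xi_{i_0}^{t_0}\xi_{j_0}^{2s_0}$, $\Psi_r=\Psi\setminus\{\xi_{j_0}^{2s_0}\}$; 2b: $\psi_r=\xi_{i_0}^{t_0}\xi_{j_0}^{2s_0}$, $\Psi_r=\Psi\setminus S(\xi_{i_0}^{t_0}\xi_{j_0}^{s_0})$; 3a: $\psi_r=\xi_{i_0}^{t_0}\xi_{j_0}^{s_0}\xi_{i_0}^{t_0}$, $\Psi_r=\Psi\setminus S(\xi_{j_0}^{s_0}\xi_{i_0}^{t_0})$; 3b: $\psi_r=\xi_{i_0}^{t_0}\xi_{j_0}^{s_0}\xi_{i_0}^{t_0}$, $\Psi_r=\Psi\setminus\{\xi_{i_0}^{2t_0}\}$; 4a: $\psi_r=\xi_{i_0}^{t_0}\xi_{j_0}^{s_0}\xi_{i_0}^{-t_0}$,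 $\Psi_r=\Psi\setminus S(\xi_{j_0}^{s_0}\xi_{i_0}^{-t_0})$; 4b: $\psi_r=\xi_{i_0}^{t_0}\xi_{j_0}^{s_0}\xi_{i_0}^{-t_0}$, $\Psi_r=S(\xi_{i_0}^{t_0})$; 5a: $\psi_r=\xi_{i_0}^{t_0}\xi_{j_0}^{s_0}\xi_{k_0}^{p_0}$, $\Psi_r=\Psi\setminus S(\xi_{j_0}^{s_0}\xi_{k_0}^{p_0})$; 5b: $\psi_r=\xi_{i_0}^{t_0}\xi_{j_0}^{s_0}\xi_{k_0}^{p_0}$, $\Psi_r=\Psi\setminus S(\xi_{i_0}^{t_0}\xi_{k_0}^{p_0})$. Let $\mathcal{G}$ be the collection of all these relations and $\mathcal{F}\subset\mathcal{G}$ those of types 1a, 2b, 3a, 4b, 5a. Let $\Delta=\{x\in\mathbb{R}^\Psi: x(\psi)>0\ \forall\psi,\ \sum_{\psi}x(\psi)=1\}$. For a relation $r$ and $x\in\Delta$ put $x_r=x(\psi_r)$, $X_r=\sum_{\psi\in\Psi_r}x(\psi)$, $f_r(x)=\frac{1-x_r}{x_r}\cdot\frac{1-X_r}{X_r}$, $F(x)=\max_{r\in\mathcal{F}}f_r(x)$, $G(x)=\max_{r\in\mathcal{G}}f_r(x)$. The number $\alpha_n$ is the unique real root greater than $(2n-1)^2$ of $\mathcal{P}(\lambda)=(8n^3-12n^2+2n+1)\lambda^4+(-64n^6+192n^5-192n^4+64n^3+4n^2+2n-4)\lambda^3+(-96n^5+224n^4-168n^3+52n^2-18n+6)\lambda^2+(32n^5-112n^4+128n^3-68n^2+22n-4)\lambda+16n^4-32n^3+24n^2-8n+1.$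 *)

theory Defs
  imports Main Complex_Main
begin

text \<open>A letter xi_i^t is encoded as the pair (i, t) with i in {1..n} and t in {-1, 1};
  a word is a list of letters (so xi_i^{2t} is the list [(i,t),(i,t)]).\<close>

type_synonym letter = "nat \<times> int"
type_synonym word = "letter list"

definition Sg :: "int set" where "Sg = {-1, 1}"

definition Psi :: "nat \<Rightarrow> word set" where
  "Psi n =
     {[(i,t),(i,t)] | i t. i \<in> {1..n} \<and> t \<in> Sg}
   \<union> {[(i,t),(j,s),(j,s)] | i t j s. i \<in> {1..n} \<and> j \<in> {1..n} \<and> t \<in> Sg \<and> s \<in> Sg \<and> i \<noteq> j}
   \<union> {[(i,t),(j,s),(k,p)] | i t j s k p. i \<in> {1..n} \<and> j \<in> {1..n} \<and> k \<in> {1..n}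
        \<and> t \<in> Sg \<and> s \<in> Sg \<and> p \<in> Sg \<and> i \<noteq> j \<and> j \<noteq> k}"

definition type1 :: "nat \<Rightarrow> word \<Rightarrow> bool" where
  "type1 n w \<longleftrightarrow> (\<exists>i t. i \<in> {1..n} \<and> t \<in> Sg \<and> w = [(i,t),(i,t)])"
definition type2 :: "nat \<Rightarrow> word \<Rightarrow> bool" where
  "type2 n w \<longleftrightarrow> (\<exists>i t j s. i \<in> {1..n} \<and> j \<in> {1..n} \<and> t \<in> Sg \<and> s \<in> Sg \<and> i \<noteq> j
      \<and> w = [(i,t),(j,s),(j,s)])"
definition type3 :: "nat \<Rightarrow> word \<Rightarrow> bool" where
  "type3 n w \<longleftrightarrow> (\<exists>i t j s. i \<in> {1..n} \<and> j \<in> {1..n} \<and> t \<in> Sg \<and> s \<in> Sg \<and> i \<noteq> j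
      \<and> w = [(i,t),(j,s),(i,t)])"
definition type4 :: "nat \<Rightarrow> word \<Rightarrow> bool" where
  "type4 n w \<longleftrightarrow> (\<exists>i t j s. i \<in> {1..n} \<and> j \<in> {1..n} \<and> t \<in> Sg \<and> s \<in> Sg \<and> i \<noteq> j
      \<and> w = [(i,t),(j,s),(i,-t)])"
definition type5 :: "nat \<Rightarrow> word \<Rightarrow> bool" where
  "type5 n w \<longleftrightarrow> (\<exists>i t j s k p. i \<in> {1..n} \<and> j \<in> {1..n} \<and> k \<in> {1..n}
      \<and> t \<in> Sg \<and> s \<in> Sg \<and> p \<in> Sg \<and> i \<noteq> j \<and> j \<noteq> k \<and> i \<noteq> k
      \<and> w = [(i,t),(j,s),(k,p)])"

definition S1 :: "nat \<Rightarrow> nat \<Rightarrow> int \<Rightarrow> word set" where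
  "S1 n a x = {w \<in> Psi n. w \<noteq> [] \<and> hd w = (a, x)}"

definition S2 :: "nat \<Rightarrow> nat \<Rightarrow> int \<Rightarrow> nat \<Rightarrow> int \<Rightarrow> word set" where
  "S2 n a x b y = {[(a,x),(b,y),(b,y)]}
     \<union> {[(a,x),(b,y),(k,p)] | k p. k \<in> {1..n} \<and> p \<in> Sg \<and> k \<noteq> b}"

type_synonym relation = "word \<times> word set"

definition R1a :: "nat \<Rightarrow> relation set" where
  "R1a n = {([(i,t),(i,t)], Psi n - S1 n i t) | i t. i \<in> {1..n} \<and> t \<in> Sg}"
definition R1b :: "nat \<Rightarrow> relation set" where
  "R1b n = {([(i,t),(i,t)], Psi n - {[(i,t),(j,s),(i,t)]}) | i t j s.
     i \<in> {1..n} \<and> j \<in> {1..n} \<and> t \<in> Sg \<and> s \<in> Sg \<and> i \<noteq> j}"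
definition R2a :: "nat \<Rightarrow> relation set" where
  "R2a n = {([(i,t),(j,s),(j,s)], Psi n - {[(j,s),(j,s)]}) | i t j s.
     i \<in> {1..n} \<and> j \<in> {1..n} \<and> t \<in> Sg \<and> s \<in> Sg \<and> i \<noteq> j}"
definition R2b :: "nat \<Rightarrow> relation set" where
  "R2b n = {([(i,t),(j,s),(j,s)], Psi n - S2 n i t j s) | i t j s.
     i \<in> {1..n} \<and> j \<in> {1..n} \<and> t \<in> Sg \<and> s \<in> Sg \<and> i \<noteq> j}"
definition R3a :: "nat \<Rightarrow> relation set" where
  "R3a n = {([(i,t),(j,s),(i,t)], Psi n - S2 n j s i t) | i t j s.
     i \<in> {1..n} \<and> j \<in> {1..n} \<and> t \<in> Sg \<and> s \<in> Sg \<and> i \<noteq> j}"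
definition R3b :: "nat \<Rightarrow> relation set" where
  "R3b n = {([(i,t),(j,s),(i,t)], Psi n - {[(i,t),(i,t)]}) | i t j s.
     i \<in> {1..n} \<and> j \<in> {1..n} \<and> t \<in> Sg \<and> s \<in> Sg \<and> i \<noteq> j}"
definition R4a :: "nat \<Rightarrow> relation set" where
  "R4a n = {([(i,t),(j,s),(i,-t)], Psi n - S2 n j s i (-t)) | i t j s.
     i \<in> {1..n} \<and> j \<in> {1..n} \<and> t \<in> Sg \<and> s \<in> Sg \<and> i \<noteq> j}"
definition R4b :: "nat \<Rightarrow> relation set" where
  "R4b n = {([(i,t),(j,s),(i,-t)], S1 n i t) | i t j s.
     i \<in> {1..n} \<and> j \<in> {1..n} \<and> t \<in> Sg \<and> s \<in> Sg \<and> i \<noteq> j}"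
definition R5a :: "nat \<Rightarrow> relation set" where
  "R5a n = {([(i,t),(j,s),(k,p)], Psi n - S2 n j s k p) | i t j s k p.
     i \<in> {1..n} \<and> j \<in> {1..n} \<and> k \<in> {1..n} \<and> t \<in> Sg \<and> s \<in> Sg \<and> p \<in> Sg
     \<and> i \<noteq> j \<and> j \<noteq> k \<and> i \<noteq> k}"
definition R5b :: "nat \<Rightarrow> relation set" where
  "R5b n = {([(i,t),(j,s),(k,p)], Psi n - S2 n i t k p) | i t j s k p.
     i \<in> {1..n} \<and> j \<in> {1..n} \<and> k \<in> {1..n} \<and> t \<in> Sg \<and> s \<in> Sg \<and> p \<in> Sg
     \<and> i \<noteq> j \<and> j \<noteq> k \<and> i \<noteq> k}"

definition RG :: "nat \<Rightarrow> relation set" where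
  "RG n = R1a n \<union> R1b n \<union> R2a n \<union> R2b n \<union> R3a n \<union> R3b n \<union> R4a n \<union> R4b n \<union> R5a n \<union> R5b n"
definition RF :: "nat \<Rightarrow> relation set" where
  "RF n = R1a n \<union> R2b n \<union> R3a n \<union> R4b n \<union> R5a n"

definition Delta :: "nat \<Rightarrow> (word \<Rightarrow> real) set" where
  "Delta n = {x. (\<forall>\<psi>\<in>Psi n. x \<psi> > 0) \<and> (\<forall>\<psi>. \<psi> \<notin> Psi n \<longrightarrow> x \<psi> = 0)
                \<and> (\<Sum>\<psi>\<in>Psi n. x \<psi>) = 1}"

definition frel :: "relation \<Rightarrow> (word \<Rightarrow> real) \<Rightarrow> real" where
  "frel r x = (let xr = x (fst r); Xr = (\<Sum>\<psi>\<in>snd r. x \<psi>)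
               in ((1 - xr) / xr) * ((1 - Xr) / Xr))"

definition Ffun :: "nat \<Rightarrow> (word \<Rightarrow> real) \<Rightarrow> real" where
  "Ffun n x = Max ((\<lambda>r. frel r x) ` RF n)"
definition Gfun :: "nat \<Rightarrow> (word \<Rightarrow> real) \<Rightarrow> real" where
  "Gfun n x = Max ((\<lambda>r. frel r x) ` RG n)"

definition Ppoly :: "nat \<Rightarrow> real \<Rightarrow> real" where
  "Ppoly n' l = (let n = real n' in
      (8*n^3 - 12*n^2 + 2*n + 1) * l^4
    + (-64*n^6 + 192*n^5 - 192*n^4 + 64*n^3 + 4*n^2 + 2*n - 4) * l^3
    + (-96*n^5 + 224*n^4 - 168*n^3 + 52*n^2 - 18*n + 6) * l^2
    + (32*n^5 - 112*n^4 + 128*n^3 - 68*n^2 + 22*n - 4) * l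
    + (16*n^4 - 32*n^3 + 24*n^2 - 8*n + 1))"

definition alpha :: "nat \<Rightarrow> real" where
  "alpha n = (THE l. l > (2 * real n - 1)^2 \<and> Ppoly n l = 0)"

end

theory Submission
  imports Defs
begin


definition PP :: "real \<Rightarrow> real \<Rightarrow> real" where
  "PP n l = (8*n^3 - 12*n^2 + 2*n + 1) * l^4
    + (-64*n^6 + 192*n^5 - 192*n^4 + 64*n^3 + 4*n^2 + 2*n - 4) * l^3
    + (-96*n^5 + 224*n^4 - 168*n^3 + 52*n^2 - 18*n + 6) * l^2
    + (32*n^5 - 112*n^4 + 128*n^3 - 68*n^2 + 22*n - 4) * l
    + (16*n^4 - 32*n^3 + 24*n^2 - 8*n + 1)"

lemma Ppoly_PP: "Ppoly n l = PP (real n) l"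
  by (simp add: Ppoly_def PP_def Let_def)

definition "Dd n l = (4 * n ^ 2 - 4 * n - 1) * (2 * n - 1) * l^2 + 2 * (2 * n ^ 2 - 1) * l - (2 * n - 1)"
definition "as n l = 1 / ((2 * n - 1) * l + 1)"
definition "bs n l = (2 * n - 1) * (l - 1) / Dd n l"
definition "cs n l = (2 * n - 1) / (2 * n - 1 + l)"

lemma I1:
  fixes n l :: real
  shows "((2*n) * (2*n-1+l) * Dd n l + 8*n*(n-1)^2 * ((2*n-1)*(l-1)) * ((2*n-1)*l+1) * (2*n-1+l)
       + 4*n*(n-1)*(2*n-1) * ((2*n-1)*l+1) * Dd n l - ((2*n-1)*l+1) * (2*n-1+l) * Dd n l) = - (2*n-1) * PP n l"
  unfolding Dd_def PP_def by algebra

lemma I2: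
  fixes n l :: real
  shows "(Dd n l - (2*n-1)*(l-1)) * ((2*n-2)*((2*n-1)*(l-1))*(2*n-1+l) + (2*n-1)*Dd n l)
     - l*((2*n-1)*(l-1)) * (Dd n l*(2*n-1+l) - ((2*n-2)*((2*n-1)*(l-1))*(2*n-1+l) + (2*n-1)*Dd n l))
     = - l * (2*n-1) * PP n l"
  unfolding Dd_def PP_def by algebra

lemma Dd_pos:
  fixes n l :: real
  assumes n: "n \<ge> 2" and l: "l \<ge> 1"
  shows "Dd n l \<ge> (4 * n ^ 2 - 4 * n - 1) * (2 * n - 1) * l^2" "Dd n l > 0"
    "4 * n ^ 2 - 4 * n - 1 \<ge> 7"
proof -
  have nn: "n * n \<ge> 2 * n" using n by (simp add: mult_right_mono)
  have K: "4 * n ^ 2 - 4 * n - 1 \<ge> 7" unfolding power2_eq_square using nn n by linarith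
  have "4*n^2-2*n-1 \<ge> 0" unfolding power2_eq_square using nn n by linarith
  hence p1: "(4*n^2-2*n-1)*l \<ge> 0" using l by simp
  have p2: "(2*n-1)*(l-1) \<ge> 0" using n l by simp
  have eq: "Dd n l = (4 * n ^ 2 - 4 * n - 1) * (2 * n - 1) * l^2 + ((4*n^2-2*n-1)*l + (2*n-1)*(l-1))"
    unfolding Dd_def by algebra
  show "Dd n l \<ge> (4 * n ^ 2 - 4 * n - 1) * (2 * n - 1) * l^2" using eq p1 p2 by linarith
  moreover have "(4 * n ^ 2 - 4 * n - 1) * (2 * n - 1) * l^2 > 0" using K n l by simp
  ultimately show "Dd n l > 0" by linarith
  show "4 * n ^ 2 - 4 * n - 1 \<ge> 7" by (rule K)
qed

lemma root_facts:
  fixes n l :: real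
  assumes n: "n \<ge> 2" and l: "l > (2*n-1)^2" and P: "PP n l = 0"
  shows "Dd n l > 0" "0 < as n l" "as n l < 1" "0 < cs n l" "cs n l < 1" "0 < bs n l"
    "2*n * as n l + 8*n*(n-1)^2 * bs n l + 4*n*(n-1) * cs n l = 1"
    "(1 - bs n l) * ((2*n-2) * bs n l + cs n l) = l * bs n l * (1 - ((2*n-2) * bs n l + cs n l))"
    "cs n l > (2*n-2)*(l-1)*(bs n l)^2"
    "l > 9" "l \<ge> 2*n-1"
proof -
  have N3: "2*n-1 \<ge> 3" using n by simp
  have "(2*n-1)^2 \<ge> 3^2" using N3 by (intro power_mono) auto
  then show l9: "l > 9" using l by simp
  have "(2*n-1)^2 \<ge> (2*n-1)" using N3 by (simp add: power2_eq_square)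
  then show lN: "l \<ge> 2*n-1" using l by simp
  have l1: "l \<ge> 1" using l9 by simp
  note DD = Dd_pos[OF n l1]
  show Dp: "Dd n l > 0" using DD l9 by simp
  have "(2*n-1)*l > 0" using N3 l9 by (intro mult_pos_pos) auto
  hence Da: "(2*n-1)*l+1 > 0" by simp
  show "0 < as n l" unfolding as_def using Da by simp
  show "as n l < 1" unfolding as_def using N3 l9 Da \<open>(2*n-1)*l > 0\<close> by (simp add: field_simps)
  show "0 < cs n l" unfolding cs_def using N3 l9 by simp
  show "cs n l < 1" unfolding cs_def using N3 l9 by (simp add: field_simps)
  show "0 < bs n l" unfolding bs_def using N3 l9 Dp by simp
  define D where "D = Dd n l"
  
  have Dc: "2*n-1+l > 0" using N3 l9 by simp
  have ab1: "(m*(1/Da) + k1*(bn/D) + k2*(N/Dc) - 1) * (Da*Dc*D) = m*Dc*D + k1*bn*Da*Dc + k2*N*Da*D - Da*Dc*D"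
    if "Da \<noteq> 0" "Dc \<noteq> 0" "D \<noteq> 0" for m k1 k2 N Da Dc D bn :: real
    using that by (simp add: field_simps)
  have ab2: "((1-bn/D)*(k*(bn/D)+N/Dc) - l*(bn/D)*(1-(k*(bn/D)+N/Dc))) * (D*D*Dc)
     = (D-bn)*(k*bn*Dc + N*D) - l*bn*(D*Dc - (k*bn*Dc + N*D))"
    if "Dc \<noteq> 0" "D \<noteq> 0" for k N Dc D bn :: real
    using that by (simp add: field_simps)
  have "(2*n * as n l + 8*n*(n-1)^2 * bs n l + 4*n*(n-1) * cs n l - 1) * (((2*n-1)*l+1)*(2*n-1+l)*D) = 0"
    unfolding as_def bs_def cs_def D_def[symmetric]
    apply (subst ab1) using Da Dc Dp D_def apply simp_all
    using I1[of n l] P unfolding D_def by (simp add: algebra_simps)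
  then show "2*n * as n l + 8*n*(n-1)^2 * bs n l + 4*n*(n-1) * cs n l = 1"
    using Da Dc Dp D_def by simp
  have "((1 - bs n l) * ((2*n-2) * bs n l + cs n l) - l * bs n l * (1 - ((2*n-2) * bs n l + cs n l))) * (D*D*(2*n-1+l)) = 0"
    unfolding bs_def cs_def D_def[symmetric]
    apply (subst ab2) using Dc Dp D_def apply simp_all
    using I2[of n l] P unfolding D_def by (simp add: algebra_simps)
  then show "(1 - bs n l) * ((2*n-2) * bs n l + cs n l) = l * bs n l * (1 - ((2*n-2) * bs n l + cs n l))"
    using Dc Dp D_def by simp
  define K where "K = 4 * n ^ 2 - 4 * n - 1"
  define N where "N = 2*n-1"
  have K7: "K \<ge> 7" using DD K_def by simp
  have DK: "D \<ge> K * N * l^2" using DD(1) l9 unfolding K_def N_def D_def by simp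
  have KNl: "K * N * l^2 > 0" using K7 N3 l9 N_def by simp
  have D2: "D^2 \<ge> (K * N * l^2)^2" using DK KNl by (intro power_mono) auto
  have e1: "(l-1)^3 \<le> l^3" using l9 by (intro power_mono) auto
  have e2: "N + l \<le> 2*l" using lN N_def by simp
  have e3: "(2*n-2)*N*(l-1)^3*(N+l) \<le> (2*n-2)*N*l^3*(2*l)"
    using e1 e2 N3 n l9 N_def by (intro mult_mono) auto
  have e4: "(2*n-2)*N*l^3*(2*l) < (K * N * l^2)^2"
  proof -
    have "(2*n-2)*2 < K*K*N" using K7 N3 N_def
    proof -
      have "K*K \<ge> 7*7" using K7 by (intro mult_mono) auto
      hence "K*K*N \<ge> 49 * N" using N3 N_def by (intro mult_right_mono) auto
      thus ?thesis using N_def n by simp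
    qed
    hence "((2*n-2)*2) * (N * l^4) < (K*K*N) * (N*l^4)" using N3 N_def l9 by (intro mult_strict_right_mono) auto
    thus ?thesis by (simp add: power2_eq_square power3_eq_cube power4_eq_xxxx algebra_simps)
  qed
  have key: "(2*n-2)*N*(l-1)^3*(N+l) < D^2" using e3 e4 D2 by linarith
  show "cs n l > (2*n-2)*(l-1)*(bs n l)^2"
    unfolding cs_def bs_def D_def[symmetric] N_def[symmetric]
  proof -
    have gen1: "k*(l-1)*(N*(l-1)/D)^2 = (k*N*(l-1)^3) * N / D^2"
      if "D \<noteq> 0" for k N l D :: real
      using that by (simp add: power_divide power2_eq_square power3_eq_cube)
    have gen2: "X * N / D^2 < N / (N+l)" if "X * (N+l) < D^2" "D \<noteq> 0" "N > 0" "N+l>0" for X N l D :: real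
    proof -
      have "X * N / D^2 = (X * (N+l)) * N / (D^2 * (N+l))" using that by simp
      also have "\<dots> < D^2 * N / (D^2 * (N+l))" using that by (intro divide_strict_right_mono mult_strict_right_mono) auto
      also have "\<dots> = N / (N+l)" using that by simp
      finally show ?thesis .
    qed
    have "(2*n-2)*(l-1)*(N*(l-1)/D)^2 = ((2*n-2)*N*(l-1)^3) * N / D^2"
      apply (rule gen1) using Dp unfolding D_def by auto
    also have "\<dots> < N / (N+l)"
      apply (rule gen2) using key Dp Dc N3 unfolding D_def N_def by auto
    finally show "(2*n-2)*(l-1)*(N*(l-1)/D)^2 < N / (N+l)" .
  qed
qed


lemma scalar_main:
  fixes n l A B C \<beta> :: real
  assumes n: "n \<ge> 2" and l: "l > (2*n-1)^2" and P: "PP n l = 0"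
    and A: "A > 0" and B: "B > 0" and C: "C > 0"
    and cons: "2*n*A + 8*n*(n-1)^2*B + 4*n*(n-1)*C = 1"
    and h1: "1 - A \<le> \<beta> * A * (2*n-1)"
    and h4: "(1 - C) * (2*n-1) \<le> \<beta> * C"
    and h5: "(1 - B) * ((2*n-2)*B + C) \<le> \<beta> * B * (1 - ((2*n-2)*B + C))"
    and bl: "\<beta> \<le> l"
  shows "A = as n l \<and> B = bs n l \<and> C = cs n l \<and> \<beta> = l"
proof -
  note rf = root_facts[OF n l P]
  define a where "a = as n l"
  define b where "b = bs n l"
  define c where "c = cs n l"
  define N where "N = 2*n-1"
  define k where "k = 2*n-2"
  define m where "m = 4*n*(n-1)"
  have N3: "N \<ge> 3" using n N_def by simp
  have k2: "k \<ge> 2" using n k_def by simp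
  have m8: "m \<ge> 8"
  proof -
    have "n*(n-1) \<ge> 2*1" using n by (intro mult_mono) auto
    thus ?thesis using m_def by simp
  qed
  have l9: "l > 9" using rf by simp
  have a0: "a > 0" "a < 1" "c > 0" "c < 1" "b > 0" using rf a_def b_def c_def by auto
  have consa: "2*n*a + m*(k*b + c) = 1"
  proof -
    have "8*n*(n-1)^2*b + 4*n*(n-1)*c = m*(k*b + c)" unfolding m_def k_def by algebra
    thus ?thesis using rf(7)[folded a_def b_def c_def] by linarith
  qed
  have consA: "2*n*A + m*(k*B + C) = 1"
  proof -
    have "8*n*(n-1)^2*B + 4*n*(n-1)*C = m*(k*B + C)" unfolding m_def k_def by algebra
    thus ?thesis using cons by linarith
  qed
  have Eb: "(1 - b) * (k * b + c) = l * b * (1 - (k * b + c))" using rf(8) b_def c_def k_def by simp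
  have cond: "c > k*(l-1)*b^2" using rf(9) b_def c_def k_def by simp
  have Nl: "N*l+1 > 0" using N3 l9 by (smt (verit) mult_pos_pos)
  have aeq: "a * (N*l+1) = 1" using Nl unfolding a_def as_def N_def by simp
  have ceq: "c * (N+l) = N" using N3 l9 unfolding c_def cs_def N_def by simp
  have "\<beta> * A * N \<le> l * A * N" using bl A N3 by (intro mult_right_mono) auto
  moreover have "1 - A \<le> \<beta>*A*N" using h1 N_def by simp
  moreover have "A*(N*l+1) = l*A*N + A" by (simp add: algebra_simps)
  ultimately have "1 \<le> A * (N*l+1)" by linarith
  hence Aa: "A \<ge> a"
  proof -
    assume *: "1 \<le> A * (N*l+1)"
    have "N*l+1 > 0" using N3 l9 by (smt (verit) mult_pos_pos)
    hence "a * (N*l+1) \<le> A * (N*l+1)" using * aeq by simp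
    thus ?thesis using \<open>N*l+1 > 0\<close> by simp
  qed
  have "\<beta> * C \<le> l * C" using bl C by (intro mult_right_mono) auto
  moreover have "(1 - C) * N \<le> \<beta> * C" using h4 N_def by simp
  ultimately have "(1 - C) * N \<le> l * C" by linarith
  hence "N \<le> C * (N+l)" by (simp add: algebra_simps)
  hence Cc: "C \<ge> c"
  proof -
    assume *: "N \<le> C * (N+l)"
    have "N+l > 0" using N3 l9 by simp
    hence "c * (N+l) \<le> C * (N+l)" using * ceq by simp
    thus ?thesis using \<open>N+l > 0\<close> by simp
  qed
  define S where "S = k*B + C"
  define Ss where "Ss = k*b + c"
  define Sc where "Sc = k*B + c"
  have m0: "m > 0" using m8 by simp
  have "m * S \<le> m * Ss" using consA consa Aa n unfolding S_def Ss_def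
    by (smt (verit, ccfv_SIG) mult_left_mono)
  hence SSs: "S \<le> Ss" using m0 by simp
  have "2*n*a > 0" using a0 n by simp
  hence "m * Ss < 1" using consa[folded Ss_def] by linarith
  hence Ss1: "Ss < 1"
  proof -
    assume *: "m * Ss < 1"
    show "Ss < 1"
    proof (rule ccontr)
      assume "\<not> Ss < 1"
      hence "m*1 \<le> m*Ss" using m0 by (intro mult_left_mono) auto
      thus False using * m8 by linarith
    qed
  qed
  have Bb: "B \<le> b"
  proof -
    have "k*B \<le> k*b" using SSs Cc unfolding S_def Ss_def by linarith
    thus ?thesis using k2 by simp
  qed
  have S1: "S < 1" using SSs Ss1 by simp
  have h5': "(1 - B) * S \<le> l * B * (1 - S)"
  proof -
    have "\<beta> * B * (1 - S) \<le> l * B * (1 - S)" using bl B S1 by (intro mult_right_mono) auto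
    thus ?thesis using h5 unfolding S_def k_def by linarith
  qed
  have ScS: "Sc \<le> S" using Cc unfolding Sc_def S_def by simp
  define E where "E = (1 - B) * Sc - l * B * (1 - Sc)"
  have lin: "E = (1 - B) * S - l * B * (1 - S) - (S - Sc) * (1 - B + l * B)"
    unfolding E_def by (simp add: algebra_simps)
  have b1: "b < 1" using Ss1 a0 k2 unfolding Ss_def
    by (smt (verit, best) mult_le_cancel_right1)
  have pos1: "1 - B + l * B > 0" using Bb b1 B l9 by (smt (verit) mult_pos_pos)
  have Ele: "E \<le> - ((S - Sc) * (1 - B + l * B))" using lin h5' by linarith
  have Eid: "E * b = (b - B) * (c - k*(l-1)*b*B)"
  proof -
    have "E * b - (b - B) * (c - k*(l-1)*b*B) = B * ((1 - b) * (k * b + c) - l * b * (1 - (k * b + c)))"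
      unfolding E_def Sc_def by algebra
    thus ?thesis using Eb by simp
  qed
  have "k*(l-1)*b*B \<le> k*(l-1)*b*b" using Bb k2 l9 a0 by (intro mult_left_mono) auto
  hence posc: "c - k*(l-1)*b*B > 0" using cond by (simp add: power2_eq_square)
  have "E * b \<le> 0"
  proof -
    have "(S - Sc) * (1 - B + l * B) \<ge> 0" using ScS pos1 by simp
    thus ?thesis using Ele a0 by (smt (verit) mult_nonneg_nonneg mult_nonpos_nonneg)
  qed
  hence "(b - B) * (c - k*(l-1)*b*B) \<le> 0" using Eid by simp
  hence "b - B \<le> 0" using posc by (smt (verit) mult_pos_pos)
  hence Beq: "B = b" using Bb by simp
  hence "E = 0" using Eid a0 by simp
  hence "(S - Sc) * (1 - B + l * B) \<le> 0" using Ele by simp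
  hence "S - Sc \<le> 0" using pos1 by (smt (verit) mult_pos_pos)
  hence Ceq: "C = c" using ScS unfolding S_def Sc_def by simp
  have "S = Ss" unfolding S_def Ss_def using Beq Ceq by simp
  hence "m*(k*B + C) = m*(k*b + c)" unfolding S_def Ss_def by simp
  hence "2*n*A = 2*n*a" using consA consa by linarith
  hence Aeq: "A = a" using n by simp
  have "l * a * N \<le> \<beta> * a * N"
  proof -
    have "1 - a = l * a * N" using aeq by (simp add: algebra_simps)
    thus ?thesis using h1 Aeq N_def by simp
  qed
  hence "l \<le> \<beta>" using a0 N3 by simp
  hence "\<beta> = l" using bl by simp
  thus ?thesis using Aeq Beq Ceq a_def b_def c_def by simp
qed


lemma PP_low:
  fixes m :: real assumes "m \<ge> 0"
  shows "PP (m+2) ((2*(m+2)-1)^2) < 0"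
proof -
  have "PP (m+2) ((2*(m+2)-1)^2) = - (276480 + 2377728*m^1 + 9354240*m^2 + 22255616*m^3 + 35652480*m^4 + 40494464*m^5 + 33421184*m^6 + 20184192*m^7 + 8848128*m^8 + 2744320*m^9 + 571392*m^10 + 71680*m^11 + 4096*m^12)"
    unfolding PP_def by algebra
  moreover have pw: "0 \<le> m^i" for i :: nat using assms by simp
  ultimately show ?thesis
    using pw[of 1] pw[of 2] pw[of 3] pw[of 4] pw[of 5] pw[of 6] pw[of 7] pw[of 8]
      pw[of 9] pw[of 10] pw[of 11] pw[of 12] by linarith
qed

lemma PP_high:
  fixes m :: real assumes "m \<ge> 0"
  shows "PP (m+2) (8*(m+2)^3) > 0"
proof -
  have "PP (m+2) (8*(m+2)^3) = (219620945 + 1750829912*m^1 + 6425251480*m^2 + 14402822336*m^3 + 22050518400*m^4 + 24408121312*m^5 + 20156380544*m^6 + 12621428736*m^7 + 6024542720*m^8 + 2182266368*m^9 + 590699520*m^10 + 115896320*m^11 + 15585280*m^12 + 1286144*m^13 + 49152*m^14)"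
    unfolding PP_def by algebra
  moreover have pw: "0 \<le> m^i" for i :: nat using assms by simp
  ultimately show ?thesis
    using pw[of 1] pw[of 2] pw[of 3] pw[of 4] pw[of 5] pw[of 6] pw[of 7] pw[of 8]
      pw[of 9] pw[of 10] pw[of 11] pw[of 12] pw[of 13] pw[of 14] by linarith
qed

lemma root_exists:
  fixes n :: real assumes n: "n \<ge> 2"
  shows "\<exists>l. l > (2*n-1)^2 \<and> PP n l = 0"
proof -
  define m where "m = n - 2"
  have m: "m \<ge> 0" "n = m + 2" using n m_def by auto
  have lo: "PP n ((2*n-1)^2) < 0" using PP_low[OF m(1)] m(2) by simp
  have hi: "PP n (8*n^3) > 0" using PP_high[OF m(1)] m(2) by simp
  have le: "(2*n-1)^2 \<le> 8*n^3"
  proof -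
    have "(2*n-1)^2 \<le> (2*n)^2" using n by (intro power_mono) auto
    also have "\<dots> = 4*n*n" by (simp add: power2_eq_square)
    also have "\<dots> \<le> 4*n*n*(2*n)" using n by simp
    finally show ?thesis by (simp add: power3_eq_cube algebra_simps)
  qed
  have cont: "continuous_on {(2*n-1)^2..8*n^3} (PP n)" unfolding PP_def by (intro continuous_intros)
  obtain x where x: "(2*n-1)^2 \<le> x" "x \<le> 8*n^3" "PP n x = 0"
    using IVT'[of "PP n" "(2*n-1)^2" 0 "8*n^3"] lo hi le cont by auto
  have "x \<noteq> (2*n-1)^2" using x lo by auto
  thus ?thesis using x by (intro exI[of _ x]) auto
qed



definition L :: "nat \<Rightarrow> letter set" where "L n = {1..n} \<times> Sg"
definition Q1 :: "nat \<Rightarrow> letter \<Rightarrow> letter set" where "Q1 n a = {b \<in> L n. fst b \<noteq> fst a}"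
definition P2 :: "nat \<Rightarrow> (letter \<times> letter) set" where "P2 n = Sigma (L n) (Q1 n)"
definition Q2 :: "nat \<Rightarrow> letter \<Rightarrow> letter \<Rightarrow> letter set" where
  "Q2 n a b = {c \<in> L n. fst c \<noteq> fst a \<and> fst c \<noteq> fst b}"
definition T3 :: "nat \<Rightarrow> ((letter \<times> letter) \<times> letter) set" where
  "T3 n = Sigma (P2 n) (\<lambda>p. Q2 n (fst p) (snd p))"
definition linv :: "letter \<Rightarrow> letter" where "linv a = (fst a, - snd a)"
definition S1' :: "nat \<Rightarrow> letter \<Rightarrow> word set" where "S1' n a = S1 n (fst a) (snd a)"
definition S2' :: "nat \<Rightarrow> letter \<Rightarrow> letter \<Rightarrow> word set" where
  "S2' n a b = S2 n (fst a) (snd a) (fst b) (snd b)"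

lemma Sg_simps: "finite Sg" "card Sg = 2" "t \<in> Sg \<Longrightarrow> -t \<in> Sg" "t \<in> Sg \<Longrightarrow> -t \<noteq> t" "t \<in> Sg \<Longrightarrow> t \<noteq> 0"
  by (auto simp: Sg_def)

lemma finite_L: "finite (L n)" and card_L: "card (L n) = 2*n"
  by (auto simp: L_def Sg_simps card_cartesian_product)

lemma Q1_eq: "Q1 n a = ({1..n} - {fst a}) \<times> Sg"
  by (auto simp: Q1_def L_def)

lemma card_Q1: "fst a \<in> {1..n} \<Longrightarrow> card (Q1 n a) = 2*(n-1)"
  unfolding Q1_eq by (simp add: card_cartesian_product Sg_simps)

lemma Q2_eq: "Q2 n a b = ({1..n} - {fst a, fst b}) \<times> Sg"
  by (auto simp: Q2_def L_def)

lemma card_Q2: "fst a \<in> {1..n} \<Longrightarrow> fst b \<in> {1..n} \<Longrightarrow> fst a \<noteq> fst b \<Longrightarrow> card (Q2 n a b) = 2*(n-2)"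
  unfolding Q2_eq by (simp add: card_cartesian_product Sg_simps card_Diff_subset)

lemma finite_Q1: "finite (Q1 n a)" and finite_Q2: "finite (Q2 n a b)" and finite_P2: "finite (P2 n)"
  and finite_T3: "finite (T3 n)"
  by (auto simp: Q1_def Q2_def P2_def T3_def finite_L intro!: finite_SigmaI)

lemma L_mem: "a \<in> L n \<longleftrightarrow> fst a \<in> {1..n} \<and> snd a \<in> Sg" by (cases a) (auto simp: L_def)

lemma P2_mem: "(a,b) \<in> P2 n \<longleftrightarrow> a \<in> L n \<and> b \<in> L n \<and> fst a \<noteq> fst b"
  by (auto simp: P2_def Q1_def)

lemma T3_mem: "((a,b),c) \<in> T3 n \<longleftrightarrow> (a,b) \<in> P2 n \<and> c \<in> L n \<and> fst c \<noteq> fst a \<and> fst c \<noteq> fst b"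
  by (auto simp: T3_def Q2_def)

lemma card_P2: "card (P2 n) = 4*n*(n-1)"
proof -
  have "card (P2 n) = (\<Sum>a\<in>L n. card (Q1 n a))" unfolding P2_def
    by (rule card_SigmaI) (auto simp: finite_L finite_Q1)
  also have "\<dots> = (\<Sum>a\<in>L n. 2*(n-1))" by (intro sum.cong) (auto simp: card_Q1 L_mem)
  also have "\<dots> = 4*n*(n-1)" by (simp add: card_L)
  finally show ?thesis .
qed

lemma card_T3: "card (T3 n) = 4*n*(n-1)*(2*(n-2))"
proof -
  have "card (T3 n) = (\<Sum>p\<in>P2 n. card (Q2 n (fst p) (snd p)))" unfolding T3_def
    by (rule card_SigmaI) (auto simp: finite_P2 finite_Q2)
  also have "\<dots> = (\<Sum>p\<in>P2 n. 2*(n-2))"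
    by (intro sum.cong) (auto simp: card_Q2 P2_def Q1_def L_mem)
  also have "\<dots> = 4*n*(n-1)*(2*(n-2))" by (simp add: card_P2)
  finally show ?thesis .
qed


lemma Psi_cases:
  assumes "w \<in> Psi n"
  shows "(\<exists>a\<in>L n. w = [a,a]) \<or> (\<exists>a b. (a,b) \<in> P2 n \<and> w = [a,b,b])
    \<or> (\<exists>a b c. (a,b) \<in> P2 n \<and> c \<in> L n \<and> fst c \<noteq> fst b \<and> w = [a,b,c])"
  using assms unfolding Psi_def by (auto simp: P2_mem L_mem)

lemma W1: "a \<in> L n \<Longrightarrow> [a,a] \<in> Psi n"
  by (cases a) (auto simp: Psi_def L_def)
lemma W2: "(a,b) \<in> P2 n \<Longrightarrow> [a,b,b] \<in> Psi n"
  by (cases a, cases b) (auto simp: Psi_def P2_mem L_mem)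
lemma W3: "(a,b) \<in> P2 n \<Longrightarrow> c \<in> L n \<Longrightarrow> fst c \<noteq> fst b \<Longrightarrow> [a,b,c] \<in> Psi n"
  by (cases a, cases b, cases c) (auto simp: Psi_def P2_mem L_mem)

lemma finite_Psi: "finite (Psi n)"
proof (rule finite_subset)
  show "Psi n \<subseteq> {w. set w \<subseteq> L n \<and> length w \<le> 3}"
    using Psi_cases by (fastforce simp: P2_mem)
  show "finite {w. set w \<subseteq> L n \<and> length w \<le> 3}" by (rule finite_lists_length_le) (rule finite_L)
qed

lemma S1'_sub: "S1' n a \<subseteq> Psi n" by (auto simp: S1'_def S1_def)

lemma finite_S1': "finite (S1' n a)" using finite_subset[OF S1'_sub finite_Psi] .

lemma S1'_mem: "w \<in> S1' n a \<longleftrightarrow> w \<in> Psi n \<and> w \<noteq> [] \<and> hd w = a"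
  by (cases a) (auto simp: S1'_def S1_def)

lemma Psi_hd: "w \<in> Psi n \<Longrightarrow> w \<noteq> [] \<and> hd w \<in> L n"
  using Psi_cases[of w n] by (auto simp: P2_mem)

lemma D0: "Psi n = (\<Union>a\<in>L n. S1' n a)"
  using Psi_hd by (auto simp: S1'_mem)

lemma sum_Psi: "sum x (Psi n) = (\<Sum>a\<in>L n. sum x (S1' n a))"
  unfolding D0 by (rule sum.UNION_disjoint) (auto simp: finite_L finite_S1' S1'_mem)

lemma S2'_eq: "S2' n a b = insert [a,b,b] ((\<lambda>c. [a,b,c]) ` {c \<in> L n. fst c \<noteq> fst b})"
  by (cases a, cases b) (auto simp: S2'_def S2_def L_mem)

lemma finite_imgS2: "finite ((\<lambda>c. [a,b,c]) ` {c \<in> L n. fst c \<noteq> fst b})"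
  by (simp add: finite_L)

lemma S2'_form: "w \<in> S2' n a b \<Longrightarrow> \<exists>c. w = [a,b,c]"
  unfolding S2'_eq by auto

lemma finite_S2': "finite (S2' n a b)"
  unfolding S2'_eq by (auto simp: finite_L)

lemma D1: assumes "a \<in> L n"
  shows "S1' n a = insert [a,a] (\<Union>b\<in>Q1 n a. S2' n a b)"
proof
  show "S1' n a \<subseteq> insert [a,a] (\<Union>b\<in>Q1 n a. S2' n a b)"
  proof
    fix w assume w: "w \<in> S1' n a"
    hence "w \<in> Psi n" "hd w = a" "w \<noteq> []" by (auto simp: S1'_mem)
    from Psi_cases[OF this(1)] show "w \<in> insert [a,a] (\<Union>b\<in>Q1 n a. S2' n a b)"
    proof (elim disjE exE conjE bexE)
      fix a' assume "a' \<in> L n" "w = [a',a']" thus ?thesis using \<open>hd w = a\<close> by simp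
    next
      fix a' b assume "(a', b) \<in> P2 n" "w = [a',b,b]"
      moreover hence "b \<in> Q1 n a" "w \<in> S2' n a b" using \<open>hd w = a\<close> by (auto simp: P2_mem Q1_def S2'_eq)
      ultimately show ?thesis by blast
    next
      fix a' b c assume "(a', b) \<in> P2 n" "c \<in> L n" "fst c \<noteq> fst b" "w = [a',b,c]"
      moreover hence "b \<in> Q1 n a" "w \<in> S2' n a b" using \<open>hd w = a\<close> by (auto simp: P2_mem Q1_def S2'_eq)
      ultimately show ?thesis by blast
    qed
  qed
  show "insert [a,a] (\<Union>b\<in>Q1 n a. S2' n a b) \<subseteq> S1' n a"
  proof
    fix w assume "w \<in> insert [a,a] (\<Union>b\<in>Q1 n a. S2' n a b)"
    then consider "w = [a,a]" | b where "b \<in> Q1 n a" "w \<in> S2' n a b" by blast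
    then show "w \<in> S1' n a"
    proof cases
      case 1 then show ?thesis using W1[OF assms] by (simp add: S1'_mem)
    next
      case 2
      hence ab: "(a,b) \<in> P2 n" using assms by (simp add: P2_def)
      from 2(2) consider "w = [a,b,b]" | c where "c \<in> L n" "fst c \<noteq> fst b" "w = [a,b,c]"
        unfolding S2'_eq by blast
      then show ?thesis
      proof cases
        case 1 then show ?thesis using W2[OF ab] by (simp add: S1'_mem)
      next
        case 2 then show ?thesis using W3[OF ab] by (simp add: S1'_mem)
      qed
    qed
  qed
qed

lemma S2'_sub: "(a,b) \<in> P2 n \<Longrightarrow> S2' n a b \<subseteq> Psi n"
  using D1[of a n] S1'_sub[of n a] by (auto simp: P2_def)

lemma sum_S1': assumes "a \<in> L n"
  shows "sum x (S1' n a) = x [a,a] + (\<Sum>b\<in>Q1 n a. sum x (S2' n a b))"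
proof -
  have "sum x (S1' n a) = x [a,a] + sum x (\<Union>b\<in>Q1 n a. S2' n a b)"
    unfolding D1[OF assms] by (rule sum.insert) (auto simp: finite_Q1 finite_S2' dest: S2'_form)
  also have "sum x (\<Union>b\<in>Q1 n a. S2' n a b) = (\<Sum>b\<in>Q1 n a. sum x (S2' n a b))"
    by (rule sum.UNION_disjoint) (auto simp: finite_Q1 finite_S2' dest!: S2'_form)
  finally show ?thesis .
qed

lemma linv_simps: "fst (linv a) = fst a" "a \<in> L n \<Longrightarrow> linv a \<in> L n" "a \<in> L n \<Longrightarrow> linv a \<noteq> a"
  by (cases a; auto simp: linv_def L_mem Sg_def)+

lemma D2: assumes "(a,b) \<in> P2 n"
  shows "{c \<in> L n. fst c \<noteq> fst b} = insert a (insert (linv a) (Q2 n a b))"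
proof -
  have a: "a \<in> L n" "fst a \<noteq> fst b" using assms by (auto simp: P2_mem)
  show ?thesis
  proof (intro set_eqI iffI)
    fix c assume c: "c \<in> {c \<in> L n. fst c \<noteq> fst b}"
    show "c \<in> insert a (insert (linv a) (Q2 n a b))"
    proof (cases "fst c = fst a")
      case True
      then show ?thesis using c a by (cases a, cases c) (auto simp: L_mem linv_def Sg_def Q2_def)
    next
      case False
      then show ?thesis using c by (auto simp: Q2_def)
    qed
  next
    fix c assume "c \<in> insert a (insert (linv a) (Q2 n a b))"
    then show "c \<in> {c \<in> L n. fst c \<noteq> fst b}" using a linv_simps(2,3)[of a n] by (auto simp: Q2_def linv_simps(1))
  qed
qed

lemma sum_S2': assumes "(a,b) \<in> P2 n"
  shows "sum x (S2' n a b) = x [a,b,b] + x [a,b,a] + x [a,b,linv a] + (\<Sum>c\<in>Q2 n a b. x [a,b,c])"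
proof -
  have a: "a \<in> L n" "fst a \<noteq> fst b" using assms by (auto simp: P2_mem)
  have "sum x (S2' n a b) = x [a,b,b] + sum x ((\<lambda>c. [a,b,c]) ` {c \<in> L n. fst c \<noteq> fst b})"
    unfolding S2'_eq by (rule sum.insert) (auto simp: finite_L)
  also have "sum x ((\<lambda>c. [a,b,c]) ` {c \<in> L n. fst c \<noteq> fst b}) = (\<Sum>c\<in>{c \<in> L n. fst c \<noteq> fst b}. x [a,b,c])"
    by (subst sum.reindex) (auto simp: inj_on_def)
  also have "\<dots> = x [a,b,a] + x [a,b,linv a] + (\<Sum>c\<in>Q2 n a b. x [a,b,c])"
  proof -
    have "a \<notin> insert (linv a) (Q2 n a b)" using linv_simps(3)[OF a(1)] by (auto simp: Q2_def)
    moreover have "linv a \<notin> Q2 n a b" by (simp add: Q2_def linv_simps(1))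
    ultimately show ?thesis unfolding D2[OF assms] by (simp add: finite_Q2 add.assoc)
  qed
  finally show ?thesis by (simp add: add.assoc)
qed


definition hh :: "real \<Rightarrow> real \<Rightarrow> real" where "hh \<beta> U = (1 - U) / (1 + (\<beta> - 1) * U)"
definition hd' :: "real \<Rightarrow> real \<Rightarrow> real" where "hd' \<beta> U = - \<beta> / (1 + (\<beta> - 1) * U)^2"

lemma tangent:
  fixes u v U \<beta> :: real
  assumes u: "u > 0" and b: "\<beta> \<ge> 1" and U: "U > 0" and h: "(1-u)*(1-v) \<le> \<beta>*u*v"
  shows "v \<ge> hh \<beta> U + hd' \<beta> U * (u - U)"
proof -
  define gu where "gu = 1 + (\<beta> - 1) * u"
  define gU where "gU = 1 + (\<beta> - 1) * U"
  have gu: "gu > 0" using u b unfolding gu_def by (smt (verit) mult_nonneg_nonneg)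
  have gU: "gU > 0" using U b unfolding gU_def by (smt (verit) mult_nonneg_nonneg)
  have "1 - u \<le> v * gu" using h unfolding gu_def by (simp add: algebra_simps)
  hence v1: "v \<ge> (1 - u) / gu" using gu by (simp add: divide_le_eq)
  have id: "(1 - u) / gu - (hh \<beta> U + hd' \<beta> U * (u - U)) = \<beta> * (\<beta> - 1) * (u - U)^2 / (gu * gU^2)"
    unfolding hh_def hd'_def gU_def[symmetric] using gu gU
    apply (simp add: field_simps power2_eq_square)
    unfolding gu_def gU_def by algebra
  have "\<beta> * (\<beta> - 1) * (u - U)^2 / (gu * gU^2) \<ge> 0" using b gu gU by simp
  thus ?thesis using id v1 by linarith
qed

lemma tangent_sum:
  fixes u v :: "'i \<Rightarrow> real"
  assumes "finite I" "\<And>i. i \<in> I \<Longrightarrow> u i > 0" "\<And>i. i \<in> I \<Longrightarrow> (1 - u i) * (1 - v i) \<le> \<beta> * u i * v i"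
    "\<beta> \<ge> 1" "U > 0"
  shows "sum v I \<ge> real (card I) * hh \<beta> U + hd' \<beta> U * (sum u I - real (card I) * U)"
proof -
  have "sum v I \<ge> (\<Sum>i\<in>I. hh \<beta> U + hd' \<beta> U * (u i - U))"
    by (rule sum_mono) (rule tangent; use assms in auto)
  also have "(\<Sum>i\<in>I. hh \<beta> U + hd' \<beta> U * (u i - U)) = real (card I) * hh \<beta> U + hd' \<beta> U * (sum u I - real (card I) * U)"
  proof -
    have "(\<Sum>i\<in>I. hh \<beta> U + hd' \<beta> U * (u i - U)) = (\<Sum>i\<in>I. hh \<beta> U) + hd' \<beta> U * (\<Sum>i\<in>I. (u i - U))"
      by (simp add: sum.distrib sum_distrib_left)
    also have "\<dots> = real (card I) * hh \<beta> U + hd' \<beta> U * (sum u I - real (card I) * U)"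
      by (simp add: sum_subtractf)
    finally show ?thesis .
  qed
  finally show ?thesis .
qed

lemma from_hh:
  fixes U V \<beta> :: real
  assumes "U > 0" "\<beta> \<ge> 1" "V \<ge> hh \<beta> U"
  shows "(1 - U) * (1 - V) \<le> \<beta> * U * V"
proof -
  have g: "1 + (\<beta> - 1) * U > 0" using assms by (smt (verit) mult_nonneg_nonneg)
  have "1 - U \<le> V * (1 + (\<beta> - 1) * U)" using assms(3) g unfolding hh_def by (simp add: divide_le_eq)
  thus ?thesis by (simp add: algebra_simps)
qed

lemma frel_ineq:
  assumes "frel r x \<le> \<beta>" "x (fst r) > 0" "sum x (snd r) > 0"
  shows "(1 - x (fst r)) * (1 - sum x (snd r)) \<le> \<beta> * x (fst r) * sum x (snd r)"
proof -
  define u where "u = x (fst r)"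
  define v where "v = sum x (snd r)"
  have "(1 - u) / u * ((1 - v) / v) \<le> \<beta>" using assms(1) unfolding frel_def Let_def u_def v_def .
  hence "(1 - u) * (1 - v) / (u * v) \<le> \<beta>" by simp
  hence "(1 - u) * (1 - v) \<le> \<beta> * (u * v)" using assms(2,3) u_def v_def by (simp add: divide_le_eq)
  thus ?thesis unfolding u_def v_def by (simp add: mult.assoc)
qed



lemma Delta_pos: "x \<in> Delta n \<Longrightarrow> w \<in> Psi n \<Longrightarrow> x w > 0"
  by (simp add: Delta_def)
lemma Delta_sum: "x \<in> Delta n \<Longrightarrow> sum x (Psi n) = 1"
  by (simp add: Delta_def)
lemma Delta_nonneg: "x \<in> Delta n \<Longrightarrow> x w \<ge> 0"
proof (cases "w \<in> Psi n")
  case True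
  assume "x \<in> Delta n" thus ?thesis using Delta_pos[of x n w] True by simp
next
  case False
  assume "x \<in> Delta n" thus ?thesis using False by (simp add: Delta_def)
qed

lemma sum_pos_sub: "x \<in> Delta n \<Longrightarrow> A \<subseteq> Psi n \<Longrightarrow> w \<in> A \<Longrightarrow> sum x A > 0"
  apply (rule sum_pos2[of A w])
  using finite_subset[OF _ finite_Psi, of A n] Delta_pos[of x n w] Delta_nonneg[of x n] by auto

lemma rel1a: "a \<in> L n \<Longrightarrow> ([a,a], Psi n - S1' n a) \<in> RF n"
  by (cases a) (auto simp: RF_def R1a_def S1'_def L_def)
lemma rel4b: "(a,b) \<in> P2 n \<Longrightarrow> ([a,b,linv a], S1' n a) \<in> RF n"
  by (cases a, cases b) (auto simp: RF_def R4b_def S1'_def P2_mem L_mem linv_def)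
lemma rel2b: "(a,b) \<in> P2 n \<Longrightarrow> ([a,b,b], Psi n - S2' n a b) \<in> RF n"
  by (cases a, cases b) (auto simp: RF_def R2b_def S2'_def P2_mem L_mem)
lemma rel3a: "(a,b) \<in> P2 n \<Longrightarrow> ([b,a,b], Psi n - S2' n a b) \<in> RF n"
  by (cases a, cases b) (auto simp: RF_def R3a_def S2'_def P2_mem L_mem)
lemma rel5a: "((a,b),c) \<in> T3 n \<Longrightarrow> ([c,a,b], Psi n - S2' n a b) \<in> RF n"
  by (cases a, cases b, cases c) (auto simp: RF_def R5a_def S2'_def T3_mem P2_mem L_mem)

lemma Sg_neg: "t \<in> Sg \<Longrightarrow> -t \<in> Sg" by (auto simp: Sg_def)

lemma W1': "i \<in> {1..n} \<Longrightarrow> t \<in> Sg \<Longrightarrow> [(i,t),(i,t)] \<in> Psi n"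
  by (rule W1) (simp add: L_def)
lemma W2': "i \<in> {1..n} \<Longrightarrow> t \<in> Sg \<Longrightarrow> j \<in> {1..n} \<Longrightarrow> s \<in> Sg \<Longrightarrow> i \<noteq> j \<Longrightarrow> [(i,t),(j,s),(j,s)] \<in> Psi n"
  by (rule W2) (simp add: P2_mem L_def)
lemma W3': "i \<in> {1..n} \<Longrightarrow> t \<in> Sg \<Longrightarrow> j \<in> {1..n} \<Longrightarrow> s \<in> Sg \<Longrightarrow> i \<noteq> j \<Longrightarrow>
   k \<in> {1..n} \<Longrightarrow> p \<in> Sg \<Longrightarrow> k \<noteq> j \<Longrightarrow> [(i,t),(j,s),(k,p)] \<in> Psi n"
  by (rule W3) (simp_all add: P2_mem L_def)

lemma RG_sub: "RG n \<subseteq> Psi n \<times> Pow (Psi n)"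
proof -
  have A: "R1a n \<union> R1b n \<subseteq> Psi n \<times> Pow (Psi n)"
    unfolding R1a_def R1b_def using W1' by auto
  have B: "R2a n \<union> R2b n \<subseteq> Psi n \<times> Pow (Psi n)"
    unfolding R2a_def R2b_def using W2' by auto
  have C: "R3a n \<union> R3b n \<subseteq> Psi n \<times> Pow (Psi n)"
    unfolding R3a_def R3b_def using W3' by auto
  have D: "R4a n \<union> R4b n \<subseteq> Psi n \<times> Pow (Psi n)"
    unfolding R4a_def R4b_def S1_def using W3' Sg_neg by auto
  have E: "R5a n \<union> R5b n \<subseteq> Psi n \<times> Pow (Psi n)"
    unfolding R5a_def R5b_def using W3' by auto
  show ?thesis using A B C D E unfolding RG_def by blast
qed

lemma RF_sub_RG: "RF n \<subseteq> RG n" unfolding RF_def RG_def by blast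

lemma finite_RG: "finite (RG n)"
  by (rule finite_subset[OF RG_sub]) (simp add: finite_Psi)
lemma finite_RF: "finite (RF n)"
  by (rule finite_subset[OF RF_sub_RG finite_RG])

lemma frel_le_F: "r \<in> RF n \<Longrightarrow> frel r x \<le> Ffun n x"
  unfolding Ffun_def by (rule Max_ge) (auto simp: finite_RF)
lemma frel_le_G: "r \<in> RG n \<Longrightarrow> frel r x \<le> Gfun n x"
  unfolding Gfun_def by (rule Max_ge) (auto simp: finite_RG)



lemma swapP2: "(\<Sum>(a,b)\<in>P2 n. g b a) = (\<Sum>(a,b)\<in>P2 n. g a b)"
  by (rule sum.reindex_bij_witness[where i="\<lambda>(a,b). (b,a)" and j="\<lambda>(a,b). (b,a)"]) (auto simp: P2_mem)

lemma rotT3: "(\<Sum>((a,b),c)\<in>T3 n. g c a b) = (\<Sum>((a,b),c)\<in>T3 n. g a b c)"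
  by (rule sum.reindex_bij_witness[where i="\<lambda>((a,b),c). ((b,c),a)" and j="\<lambda>((a,b),c). ((c,a),b)"])
     (auto simp: T3_mem P2_mem)

lemma sumP2_fst: "(\<Sum>(a,b)\<in>P2 n. g a) = real (2*(n-1)) * (\<Sum>a\<in>L n. g a)"
proof -
  have "(\<Sum>(a,b)\<in>P2 n. g a) = (\<Sum>a\<in>L n. \<Sum>b\<in>Q1 n a. g a)"
    unfolding P2_def by (rule sum.Sigma[symmetric]) (auto simp: finite_L finite_Q1)
  also have "\<dots> = (\<Sum>a\<in>L n. real (2*(n-1)) * g a)"
    by (intro sum.cong) (auto simp: card_Q1 L_mem)
  finally show ?thesis by (simp add: sum_distrib_left)
qed

lemma sumT3_fst: "(\<Sum>((a,b),c)\<in>T3 n. g a b) = real (2*(n-2)) * (\<Sum>(a,b)\<in>P2 n. g a b)"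
proof -
  have "(\<Sum>((a,b),c)\<in>T3 n. g a b) = (\<Sum>p\<in>P2 n. \<Sum>c\<in>Q2 n (fst p) (snd p). g (fst p) (snd p))"
    unfolding T3_def by (subst sum.Sigma) (auto simp: finite_P2 finite_Q2 case_prod_beta)
  also have "\<dots> = (\<Sum>p\<in>P2 n. real (2*(n-2)) * g (fst p) (snd p))"
    by (intro sum.cong) (auto simp: card_Q2 P2_mem L_mem)
  finally show ?thesis by (simp add: sum_distrib_left case_prod_beta)
qed

lemma sum_L_s1: "(\<Sum>a\<in>L n. sum x (S1' n a)) = (\<Sum>a\<in>L n. x [a,a]) + (\<Sum>(a,b)\<in>P2 n. sum x (S2' n a b))"
proof -
  have "(\<Sum>a\<in>L n. sum x (S1' n a)) = (\<Sum>a\<in>L n. x [a,a] + (\<Sum>b\<in>Q1 n a. sum x (S2' n a b)))"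
    by (intro sum.cong) (auto simp: sum_S1')
  also have "\<dots> = (\<Sum>a\<in>L n. x [a,a]) + (\<Sum>a\<in>L n. \<Sum>b\<in>Q1 n a. sum x (S2' n a b))"
    by (simp add: sum.distrib)
  also have "(\<Sum>a\<in>L n. \<Sum>b\<in>Q1 n a. sum x (S2' n a b)) = (\<Sum>(a,b)\<in>P2 n. sum x (S2' n a b))"
    unfolding P2_def by (rule sum.Sigma) (auto simp: finite_L finite_Q1)
  finally show ?thesis .
qed

lemma sum_P2_s2: "(\<Sum>(a,b)\<in>P2 n. sum x (S2' n a b)) =
   (\<Sum>(a,b)\<in>P2 n. x [a,b,b]) + (\<Sum>(a,b)\<in>P2 n. x [a,b,a]) + (\<Sum>(a,b)\<in>P2 n. x [a,b,linv a])
   + (\<Sum>((a,b),c)\<in>T3 n. x [a,b,c])"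
proof -
  have "(\<Sum>(a,b)\<in>P2 n. sum x (S2' n a b)) = (\<Sum>(a,b)\<in>P2 n. x [a,b,b] + x [a,b,a] + x [a,b,linv a] + (\<Sum>c\<in>Q2 n a b. x [a,b,c]))"
    by (intro sum.cong) (auto simp: sum_S2')
  also have "\<dots> = (\<Sum>(a,b)\<in>P2 n. x [a,b,b]) + (\<Sum>(a,b)\<in>P2 n. x [a,b,a]) + (\<Sum>(a,b)\<in>P2 n. x [a,b,linv a])
   + (\<Sum>(a,b)\<in>P2 n. \<Sum>c\<in>Q2 n a b. x [a,b,c])"
    by (simp add: sum.distrib case_prod_beta)
  also have "(\<Sum>(a,b)\<in>P2 n. \<Sum>c\<in>Q2 n a b. x [a,b,c]) = (\<Sum>((a,b),c)\<in>T3 n. x [a,b,c])"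
  proof -
    have "(\<Sum>((a,b),c)\<in>T3 n. x [a,b,c]) = (\<Sum>p\<in>P2 n. \<Sum>c\<in>Q2 n (fst p) (snd p). x [fst p, snd p, c])"
      unfolding T3_def by (subst sum.Sigma) (auto simp: finite_P2 finite_Q2 case_prod_beta)
    thus ?thesis by (simp add: case_prod_beta)
  qed
  finally show ?thesis .
qed


lemma constraint_sum:
  assumes x: "x \<in> Delta n"
  shows "(\<Sum>a\<in>L n. x [a,a]) + (\<Sum>(a,b)\<in>P2 n. x [a,b,linv a])
      + ((\<Sum>(a,b)\<in>P2 n. x [a,b,b]) + (\<Sum>(a,b)\<in>P2 n. x [b,a,b]) + (\<Sum>((a,b),c)\<in>T3 n. x [c,a,b])) = 1"
    "(\<Sum>(a,b)\<in>P2 n. sum x (S2' n a b)) = 1 - (\<Sum>a\<in>L n. x [a,a])"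
proof -
  have 1: "(\<Sum>a\<in>L n. sum x (S1' n a)) = 1" using sum_Psi[of x n] Delta_sum[OF x] by simp
  have sw: "(\<Sum>(a,b)\<in>P2 n. x [b,a,b]) = (\<Sum>(a,b)\<in>P2 n. x [a,b,a])"
    using swapP2[of "\<lambda>a b. x [a,b,a]" n] by simp
  have rt: "(\<Sum>((a,b),c)\<in>T3 n. x [c,a,b]) = (\<Sum>((a,b),c)\<in>T3 n. x [a,b,c])"
    using rotT3[of "\<lambda>a b c. x [a,b,c]" n] by simp
  show "(\<Sum>a\<in>L n. x [a,a]) + (\<Sum>(a,b)\<in>P2 n. x [a,b,linv a])
      + ((\<Sum>(a,b)\<in>P2 n. x [a,b,b]) + (\<Sum>(a,b)\<in>P2 n. x [b,a,b]) + (\<Sum>((a,b),c)\<in>T3 n. x [c,a,b])) = 1"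
    using 1 sum_L_s1[of x n] sum_P2_s2[of x n] sw rt by linarith
  show "(\<Sum>(a,b)\<in>P2 n. sum x (S2' n a b)) = 1 - (\<Sum>a\<in>L n. x [a,a])"
    using 1 sum_L_s1[of x n] by linarith
qed

lemma jensen_main:
  fixes x :: "word \<Rightarrow> real"
  assumes n: "n \<ge> 2" and x: "x \<in> Delta n" and \<beta>: "\<beta> \<ge> 1" and F: "\<And>r. r \<in> RF n \<Longrightarrow> frel r x \<le> \<beta>"
  defines "A \<equiv> (\<Sum>a\<in>L n. x [a,a]) / (2 * real n)"
    and "C \<equiv> (\<Sum>(a,b)\<in>P2 n. x [a,b,linv a]) / (4 * real n * (real n - 1))"
    and "B \<equiv> ((\<Sum>(a,b)\<in>P2 n. x [a,b,b]) + (\<Sum>(a,b)\<in>P2 n. x [b,a,b]) + (\<Sum>((a,b),c)\<in>T3 n. x [c,a,b]))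
              / (8 * real n * (real n - 1)^2)"
  shows "A > 0 \<and> B > 0 \<and> C > 0 \<and> 2*real n*A + 8*real n*(real n-1)^2*B + 4*real n*(real n-1)*C = 1
    \<and> 1 - A \<le> \<beta> * A * (2*real n-1) \<and> (1 - C) * (2*real n-1) \<le> \<beta> * C
    \<and> (1 - B) * ((2*real n-2)*B + C) \<le> \<beta> * B * (1 - ((2*real n-2)*B + C))"
proof -
  define rn where "rn = real n"
  have rn: "rn \<ge> 2" using n rn_def by simp
  define T1 where "T1 = (\<Sum>a\<in>L n. x [a,a])"
  define T4 where "T4 = (\<Sum>(a,b)\<in>P2 n. x [a,b,linv a])"
  define TB where "TB = (\<Sum>(a,b)\<in>P2 n. x [a,b,b]) + (\<Sum>(a,b)\<in>P2 n. x [b,a,b]) + (\<Sum>((a,b),c)\<in>T3 n. x [c,a,b])"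
  have cons: "T1 + T4 + TB = 1" using constraint_sum(1)[OF x] unfolding T1_def T4_def TB_def by simp
  have s2sum: "(\<Sum>(a,b)\<in>P2 n. sum x (S2' n a b)) = 1 - T1" using constraint_sum(2)[OF x] T1_def by simp
  have xpos: "\<And>w. w \<in> Psi n \<Longrightarrow> x w > 0" using Delta_pos[OF x] .
  have L_ne: "L n \<noteq> {}" using n by (auto simp: L_def Sg_def)
  obtain a0 where a0: "a0 \<in> L n" using L_ne by blast
  have cL: "real (card (L n)) = 2*rn" using card_L rn_def by simp
  have cP2: "real (card (P2 n)) = 4*rn*(rn-1)" using card_P2[of n] n rn_def by (simp add: of_nat_diff)
  have cT3: "real (card (T3 n)) = 4*rn*(rn-1)*(2*rn-4)" using card_T3[of n] n rn_def by (simp add: of_nat_diff)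
  have cQ1: "real (2*(n-1)) = 2*rn-2" using n rn_def by (simp add: of_nat_diff)
  have cQ2: "real (2*(n-2)) = 2*rn-4" using n rn_def by (simp add: of_nat_diff)
  have P2_ne: "P2 n \<noteq> {}" using cP2 rn by auto
  have T1p: "T1 > 0" unfolding T1_def by (rule sum_pos) (auto simp: finite_L L_ne intro: xpos W1)
  have T4p: "T4 > 0" unfolding T4_def
    by (rule sum_pos) (auto simp: finite_P2 P2_ne P2_mem linv_simps intro!: xpos W3)
  have TBp: "TB > 0"
  proof -
    have "(\<Sum>(a,b)\<in>P2 n. x [a,b,b]) > 0"
      by (rule sum_pos) (auto simp: finite_P2 P2_ne intro!: xpos W2)
    moreover have "(\<Sum>(a,b)\<in>P2 n. x [b,a,b]) \<ge> 0"
      by (rule sum_nonneg) (auto simp: Delta_nonneg[OF x])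
    moreover have "(\<Sum>((a,b),c)\<in>T3 n. x [c,a,b]) \<ge> 0"
      by (rule sum_nonneg) (auto simp: Delta_nonneg[OF x])
    ultimately show ?thesis unfolding TB_def by linarith
  qed
  have Aeq: "A = T1 / (2*rn)" unfolding A_def T1_def rn_def by simp
  have Ceq: "C = T4 / (4*rn*(rn-1))" unfolding C_def T4_def rn_def by simp
  have Beq: "B = TB / (8*rn*(rn-1)^2)" unfolding B_def TB_def rn_def by simp
  have Ap: "A > 0" using Aeq T1p rn by simp
  have Cp: "C > 0" using Ceq T4p rn by simp
  have Bp: "B > 0" using Beq TBp rn by simp
  have T1A: "T1 = 2*rn*A" using Aeq rn by simp
  have T4C: "T4 = 4*rn*(rn-1)*C" using Ceq rn by simp
  have TBB: "TB = 8*rn*(rn-1)^2*B" using Beq rn by simp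
  have consABC: "2*rn*A + 8*rn*(rn-1)^2*B + 4*rn*(rn-1)*C = 1" using cons T1A T4C TBB by simp
  have h1: "1 - A \<le> \<beta> * A * (2*rn-1)"
  proof -
    define v where "v a = sum x (Psi n - S1' n a)" for a
    have ineq: "(1 - x [a,a]) * (1 - v a) \<le> \<beta> * x [a,a] * v a" if a: "a \<in> L n" for a
    proof -
      have "[linv a, linv a] \<in> Psi n - S1' n a" using W1[OF linv_simps(2)[OF a]] linv_simps(3)[OF a]
        by (auto simp: S1'_mem)
      hence "v a > 0" unfolding v_def by (intro sum_pos_sub[OF x]) auto
      thus ?thesis using frel_ineq[OF F[OF rel1a[OF a]]] xpos[OF W1[OF a]] unfolding v_def by simp
    qed
    have vs: "sum v (L n) = 2*rn - 1"
    proof -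
      have "sum v (L n) = (\<Sum>a\<in>L n. 1 - sum x (S1' n a))"
        unfolding v_def by (intro sum.cong) (auto simp: sum_diff finite_Psi S1'_sub Delta_sum[OF x])
      also have "\<dots> = 2*rn - 1" using sum_Psi[of x n] Delta_sum[OF x] cL by (simp add: sum_subtractf)
      finally show ?thesis .
    qed
    have "sum v (L n) \<ge> real (card (L n)) * hh \<beta> A + hd' \<beta> A * ((\<Sum>a\<in>L n. x [a,a]) - real (card (L n)) * A)"
      by (rule tangent_sum) (use ineq xpos W1 finite_L \<beta> Ap in auto)
    hence "2*rn - 1 \<ge> 2*rn * hh \<beta> A" using vs cL T1A T1_def by simp
    hence "(2*rn-1)/(2*rn) \<ge> hh \<beta> A" using rn by (simp add: field_simps)
    from from_hh[OF Ap \<beta> this] have "(1 - A) * (1 - (2*rn-1)/(2*rn)) \<le> \<beta> * A * ((2*rn-1)/(2*rn))" .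
    moreover have "1 - (2*rn-1)/(2*rn) = 1/(2*rn)" using rn by (simp add: field_simps)
    ultimately have "(1 - A) * (1/(2*rn)) \<le> (\<beta> * A * (2*rn-1)) * (1/(2*rn))" by simp
    hence "(1 - A) / (2*rn) \<le> (\<beta> * A * (2*rn-1)) / (2*rn)" by simp
    thus ?thesis using rn by (simp add: divide_le_cancel)
  qed
  have h4: "(1 - C) * (2*rn-1) \<le> \<beta> * C"
  proof -
    define v where "v p = sum x (S1' n (fst p))" for p :: "letter \<times> letter"
    define u where "u p = x [fst p, snd p, linv (fst p)]" for p :: "letter \<times> letter"
    have up: "u p > 0" if p: "p \<in> P2 n" for p
      using p unfolding u_def by (cases p) (auto simp: P2_mem linv_simps intro!: xpos W3)
    have ineq: "(1 - u p) * (1 - v p) \<le> \<beta> * u p * v p" if p: "p \<in> P2 n" for p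
    proof -
      obtain a b where ab: "p = (a,b)" by (cases p)
      have a: "a \<in> L n" using p ab by (simp add: P2_mem)
      have "[a,a] \<in> S1' n a" using W1[OF a] by (simp add: S1'_mem)
      hence "v p > 0" unfolding v_def ab by (intro sum_pos_sub[OF x]) (auto simp: S1'_sub)
      thus ?thesis using frel_ineq[OF F[OF rel4b[OF p[unfolded ab]]]] up[OF p] unfolding v_def u_def ab by simp
    qed
    have vs: "sum v (P2 n) = 2*rn - 2"
    proof -
      have "sum v (P2 n) = (\<Sum>(a,b)\<in>P2 n. sum x (S1' n a))" unfolding v_def by (simp add: case_prod_beta)
      also have "\<dots> = real (2*(n-1)) * (\<Sum>a\<in>L n. sum x (S1' n a))" by (rule sumP2_fst)
      also have "\<dots> = 2*rn - 2" using sum_Psi[of x n] Delta_sum[OF x] cQ1 by simp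
      finally show ?thesis .
    qed
    have us: "sum u (P2 n) = T4" unfolding u_def T4_def by (simp add: case_prod_beta)
    have "sum v (P2 n) \<ge> real (card (P2 n)) * hh \<beta> C + hd' \<beta> C * (sum u (P2 n) - real (card (P2 n)) * C)"
      by (rule tangent_sum) (use ineq up finite_P2 \<beta> Cp in auto)
    hence "2*rn - 2 \<ge> 4*rn*(rn-1) * hh \<beta> C" using vs cP2 us T4C by simp
    hence "(2*rn-2) * (2*rn * hh \<beta> C) \<le> (2*rn-2) * 1" by (simp add: algebra_simps)
    hence "2*rn * hh \<beta> C \<le> 1" using rn by (simp add: mult_le_cancel_left_pos)
    hence "1/(2*rn) \<ge> hh \<beta> C" using rn by (simp add: le_divide_eq mult.commute)
    from from_hh[OF Cp \<beta> this] have "(1 - C) * (1 - 1/(2*rn)) \<le> \<beta> * C * (1/(2*rn))" .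
    moreover have "1 - 1/(2*rn) = (2*rn-1) * (1/(2*rn))" using rn by (simp add: field_simps)
    ultimately have "((1 - C) * (2*rn-1)) * (1/(2*rn)) \<le> (\<beta> * C) * (1/(2*rn))" by (simp add: mult.assoc)
    hence "((1 - C) * (2*rn-1)) / (2*rn) \<le> (\<beta> * C) / (2*rn)" by simp
    thus ?thesis using rn by (simp add: divide_le_cancel)
  qed
  have h5: "(1 - B) * ((2*rn-2)*B + C) \<le> \<beta> * B * (1 - ((2*rn-2)*B + C))"
  proof -
    define vv where "vv p = sum x (Psi n - S2' n (fst p) (snd p))" for p :: "letter \<times> letter"
    define u2 where "u2 p = x [fst p, snd p, snd p]" for p :: "letter \<times> letter"
    define u3 where "u3 p = x [snd p, fst p, snd p]" for p :: "letter \<times> letter"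
    define u5 where "u5 t = x [snd t, fst (fst t), snd (fst t)]" for t :: "(letter \<times> letter) \<times> letter"
    define v5 where "v5 t = vv (fst t)" for t :: "(letter \<times> letter) \<times> letter"
    have vvp: "vv p > 0" if p: "p \<in> P2 n" for p
    proof -
      obtain a b where ab: "p = (a,b)" by (cases p)
      have a: "a \<in> L n" using p ab by (simp add: P2_mem)
      have "[a,a] \<in> Psi n - S2' n a b" using W1[OF a] by (auto dest: S2'_form)
      thus ?thesis unfolding vv_def ab by (intro sum_pos_sub[OF x]) auto
    qed
    have vveq: "vv p = 1 - sum x (S2' n (fst p) (snd p))" if p: "p \<in> P2 n" for p
      using p unfolding vv_def
      by (cases p) (simp add: sum_diff finite_Psi S2'_sub Delta_sum[OF x])
    have u2p: "u2 p > 0" if p: "p \<in> P2 n" for p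
      using p unfolding u2_def by (cases p) (auto intro!: xpos W2)
    have u3p: "u3 p > 0" if p: "p \<in> P2 n" for p
      using p unfolding u3_def by (cases p) (auto simp: P2_mem intro!: xpos W3)
    have u5p: "u5 t > 0" if t: "t \<in> T3 n" for t
      using t unfolding u5_def by (cases t) (auto simp: T3_mem P2_mem intro!: xpos W3)
    have i2: "(1 - u2 p) * (1 - vv p) \<le> \<beta> * u2 p * vv p" if p: "p \<in> P2 n" for p
      using frel_ineq[OF F[OF rel2b[of "fst p" "snd p"]]] p u2p[OF p] vvp[OF p] unfolding u2_def vv_def by simp
    have i3: "(1 - u3 p) * (1 - vv p) \<le> \<beta> * u3 p * vv p" if p: "p \<in> P2 n" for p
      using frel_ineq[OF F[OF rel3a[of "fst p" "snd p"]]] p u3p[OF p] vvp[OF p] unfolding u3_def vv_def by simp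
    have i5: "(1 - u5 t) * (1 - v5 t) \<le> \<beta> * u5 t * v5 t" if t: "t \<in> T3 n" for t
    proof -
      have ft: "fst t \<in> P2 n" using t by (auto simp: T3_def)
      show ?thesis
        using frel_ineq[OF F[OF rel5a[of "fst (fst t)" "snd (fst t)" "snd t"]]] t u5p[OF t] vvp[OF ft]
        unfolding u5_def v5_def vv_def by simp
    qed
    have t2: "sum vv (P2 n) \<ge> real (card (P2 n)) * hh \<beta> B + hd' \<beta> B * (sum u2 (P2 n) - real (card (P2 n)) * B)"
      by (rule tangent_sum) (use i2 u2p finite_P2 \<beta> Bp in auto)
    have t3: "sum vv (P2 n) \<ge> real (card (P2 n)) * hh \<beta> B + hd' \<beta> B * (sum u3 (P2 n) - real (card (P2 n)) * B)"
      by (rule tangent_sum) (use i3 u3p finite_P2 \<beta> Bp in auto)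
    have t5: "sum v5 (T3 n) \<ge> real (card (T3 n)) * hh \<beta> B + hd' \<beta> B * (sum u5 (T3 n) - real (card (T3 n)) * B)"
      by (rule tangent_sum) (use i5 u5p finite_T3 \<beta> Bp in auto)
    have us: "sum u2 (P2 n) + sum u3 (P2 n) + sum u5 (T3 n) = TB"
      unfolding TB_def u2_def u3_def u5_def by (simp add: case_prod_beta)
    have vvs: "sum vv (P2 n) = 4*rn*(rn-1) - (1 - T1)"
    proof -
      have "sum vv (P2 n) = (\<Sum>p\<in>P2 n. 1 - sum x (S2' n (fst p) (snd p)))"
        by (intro sum.cong) (auto simp: vveq)
      also have "\<dots> = real (card (P2 n)) - (\<Sum>(a,b)\<in>P2 n. sum x (S2' n a b))"
        by (simp add: sum_subtractf case_prod_beta)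
      finally show ?thesis using s2sum cP2 by simp
    qed
    have v5s: "sum v5 (T3 n) = (2*rn-4) * sum vv (P2 n)"
    proof -
      have "sum v5 (T3 n) = (\<Sum>((a,b),c)\<in>T3 n. vv (a,b))" unfolding v5_def by (simp add: case_prod_beta)
      also have "\<dots> = real (2*(n-2)) * (\<Sum>(a,b)\<in>P2 n. vv (a,b))" by (rule sumT3_fst)
      finally show ?thesis using cQ2 by (simp add: case_prod_beta)
    qed
    define K where "K = 8*rn*(rn-1)^2"
    have K: "K > 0" using rn K_def by simp
    have cK: "real (card (P2 n)) + real (card (P2 n)) + real (card (T3 n)) = K"
      unfolding cP2 cT3 K_def by algebra
    have "sum vv (P2 n) + sum vv (P2 n) + sum v5 (T3 n) \<ge> K * hh \<beta> B + hd' \<beta> B * (TB - K * B)"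
    proof -
      have "K * hh \<beta> B + hd' \<beta> B * (TB - K * B) =
        (real (card (P2 n)) * hh \<beta> B + hd' \<beta> B * (sum u2 (P2 n) - real (card (P2 n)) * B))
        + (real (card (P2 n)) * hh \<beta> B + hd' \<beta> B * (sum u3 (P2 n) - real (card (P2 n)) * B))
        + (real (card (T3 n)) * hh \<beta> B + hd' \<beta> B * (sum u5 (T3 n) - real (card (T3 n)) * B))"
        unfolding cK[symmetric] us[symmetric] by (simp add: algebra_simps)
      thus ?thesis using t2 t3 t5 by linarith
    qed
    moreover have "TB - K * B = 0" using TBB K_def by simp
    moreover define S where "S = (2*rn-2)*B + C"
    moreover have "1 - T1 = 4*rn*(rn-1)*S" using cons T4C TBB unfolding S_def by (simp add: algebra_simps power2_eq_square)
    moreover have "sum vv (P2 n) + sum vv (P2 n) + sum v5 (T3 n) = K * (1 - S)"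
    proof -
      have e: "1 - T1 = 4*rn*(rn-1)*S" using cons T4C TBB unfolding S_def by (simp add: algebra_simps power2_eq_square)
      have "sum vv (P2 n) = 4*rn*(rn-1) - 4*rn*(rn-1)*S" using vvs e by simp
      hence Y: "sum vv (P2 n) = 4*rn*(rn-1)*(1-S)" by (simp add: right_diff_distrib)
      have "sum vv (P2 n) + sum vv (P2 n) + sum v5 (T3 n) = (2*rn-2) * sum vv (P2 n)"
        unfolding v5s by algebra
      also have "\<dots> = K * (1 - S)" unfolding Y K_def by algebra
      finally show ?thesis .
    qed
    ultimately have "K * (1 - S) \<ge> K * hh \<beta> B" by simp
    hence "1 - S \<ge> hh \<beta> B" using K by simp
    from from_hh[OF Bp \<beta> this] have "(1 - B) * (1 - (1 - S)) \<le> \<beta> * B * (1 - S)" .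
    thus ?thesis unfolding S_def by simp
  qed
  show ?thesis using Ap Bp Cp consABC h1 h4 h5 rn_def by simp
qed



lemma ty1: "a \<in> L n \<Longrightarrow> type1 n [a,a]"
  by (cases a) (auto simp: type1_def L_def)
lemma ty2: "(a,b) \<in> P2 n \<Longrightarrow> type2 n [a,b,b]"
  by (cases a, cases b) (auto simp: type2_def P2_mem L_mem)
lemma ty3: "(a,b) \<in> P2 n \<Longrightarrow> type3 n [a,b,a]"
  by (cases a, cases b) (auto simp: type3_def P2_mem L_mem)
lemma ty4: "(a,b) \<in> P2 n \<Longrightarrow> type4 n [a,b,linv a]"
  by (cases a, cases b) (auto simp: type4_def P2_mem L_mem linv_def)
lemma ty5: "(a,b) \<in> P2 n \<Longrightarrow> c \<in> Q2 n a b \<Longrightarrow> type5 n [a,b,c]"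
  by (cases a, cases b, cases c) (auto simp: type5_def P2_mem L_mem Q2_def)
lemma nty1: "\<not> type1 n [a,b,c]" by (auto simp: type1_def)
lemma nty4_2: "(a,b) \<in> P2 n \<Longrightarrow> \<not> type4 n [a,b,b]"
  by (cases a, cases b) (auto simp: type4_def P2_mem)
lemma nty4_3: "(a,b) \<in> P2 n \<Longrightarrow> \<not> type4 n [a,b,a]"
  by (cases a, cases b) (auto simp: type4_def P2_mem L_mem Sg_def)
lemma nty4_5: "c \<in> Q2 n a b \<Longrightarrow> \<not> type4 n [a,b,c]"
  by (cases a, cases b, cases c) (auto simp: type4_def Q2_def)

definition symv :: "nat \<Rightarrow> (word \<Rightarrow> real) \<Rightarrow> real \<Rightarrow> real \<Rightarrow> real \<Rightarrow> bool" where
  "symv n x A0 B0 C0 \<longleftrightarrow> (\<forall>a\<in>L n. x [a,a] = A0) \<and> (\<forall>a b. (a,b) \<in> P2 n \<longrightarrow>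
     x [a,b,b] = B0 \<and> x [a,b,a] = B0 \<and> x [a,b,linv a] = C0 \<and> (\<forall>c\<in>Q2 n a b. x [a,b,c] = B0))"

lemma symvD: assumes "symv n x A0 B0 C0"
  shows "a \<in> L n \<Longrightarrow> x [a,a] = A0" "(a,b) \<in> P2 n \<Longrightarrow> x [a,b,b] = B0"
    "(a,b) \<in> P2 n \<Longrightarrow> x [a,b,a] = B0" "(a,b) \<in> P2 n \<Longrightarrow> x [a,b,linv a] = C0"
    "(a,b) \<in> P2 n \<Longrightarrow> c \<in> Q2 n a b \<Longrightarrow> x [a,b,c] = B0"
  using assms unfolding symv_def by blast+

lemma symv_s2:
  assumes n: "n \<ge> 2" and s: "symv n x A0 B0 C0" and p: "(a,b) \<in> P2 n"
  shows "sum x (S2' n a b) = (2*real n-2)*B0 + C0"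
proof -
  have "sum x (S2' n a b) = B0 + B0 + C0 + (\<Sum>c\<in>Q2 n a b. B0)"
    unfolding sum_S2'[OF p] using symvD[OF s] p by simp
  also have "(\<Sum>c\<in>Q2 n a b. B0) = real (2*(n-2)) * B0"
    using card_Q2[of a n b] p by (simp add: P2_mem L_mem)
  finally show ?thesis using n by (simp add: of_nat_diff algebra_simps)
qed

lemma symv_s1:
  assumes n: "n \<ge> 2" and s: "symv n x A0 B0 C0" and a: "a \<in> L n"
  shows "sum x (S1' n a) = A0 + (2*real n-2)*((2*real n-2)*B0 + C0)"
proof -
  have "sum x (S1' n a) = A0 + (\<Sum>b\<in>Q1 n a. (2*real n-2)*B0 + C0)"
    unfolding sum_S1'[OF a] using symvD(1)[OF s a] symv_s2[OF n s] a by (simp add: P2_def)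
  also have "(\<Sum>b\<in>Q1 n a. (2*real n-2)*B0 + C0) = real (2*(n-1)) * ((2*real n-2)*B0 + C0)"
    using card_Q1[of a n] a by (simp add: L_mem)
  finally show ?thesis using n by (simp add: of_nat_diff algebra_simps)
qed

lemma symv_total:
  assumes n: "n \<ge> 2" and s: "symv n x A0 B0 C0"
  shows "sum x (Psi n) = 2*real n*A0 + 8*real n*(real n-1)^2*B0 + 4*real n*(real n-1)*C0"
proof -
  have "sum x (Psi n) = (\<Sum>a\<in>L n. A0 + (2*real n-2)*((2*real n-2)*B0 + C0))"
    unfolding sum_Psi by (intro sum.cong) (auto simp: symv_s1[OF n s])
  also have "\<dots> = 2*real n * (A0 + (2*real n-2)*((2*real n-2)*B0 + C0))" by (simp add: card_L)
  also have "\<dots> = 2*real n*A0 + 8*real n*(real n-1)^2*B0 + 4*real n*(real n-1)*C0" by algebra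
  finally show ?thesis .
qed

lemma symv_T:
  assumes n: "n \<ge> 2" and s: "symv n x A0 B0 C0"
  shows "(\<Sum>a\<in>L n. x [a,a]) = 2*real n*A0"
    "(\<Sum>(a,b)\<in>P2 n. x [a,b,linv a]) = 4*real n*(real n-1)*C0"
    "(\<Sum>(a,b)\<in>P2 n. x [a,b,b]) + (\<Sum>(a,b)\<in>P2 n. x [b,a,b]) + (\<Sum>((a,b),c)\<in>T3 n. x [c,a,b])
      = 8*real n*(real n-1)^2*B0"
proof -
  show "(\<Sum>a\<in>L n. x [a,a]) = 2*real n*A0"
    using symvD(1)[OF s] by (simp add: card_L)
  have cP2: "real (card (P2 n)) = 4*real n*(real n-1)" using card_P2[of n] n by (simp add: of_nat_diff)
  have cT3: "real (card (T3 n)) = 4*real n*(real n-1)*(2*real n-4)" using card_T3[of n] n by (simp add: of_nat_diff)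
  show "(\<Sum>(a,b)\<in>P2 n. x [a,b,linv a]) = 4*real n*(real n-1)*C0"
  proof -
    have "(\<Sum>(a,b)\<in>P2 n. x [a,b,linv a]) = (\<Sum>p\<in>P2 n. C0)"
      using symvD(4)[OF s] by (intro sum.cong) auto
    thus ?thesis using cP2 by simp
  qed
  have e1: "(\<Sum>(a,b)\<in>P2 n. x [a,b,b]) = (\<Sum>p\<in>P2 n. B0)"
    using symvD(2)[OF s] by (intro sum.cong) auto
  have e2: "(\<Sum>(a,b)\<in>P2 n. x [b,a,b]) = (\<Sum>p\<in>P2 n. B0)"
    using symvD(3)[OF s] by (intro sum.cong) (auto simp: P2_mem)
  have x5: "x [c,a,b] = B0" if t: "((a,b),c) \<in> T3 n" for a b c
  proof -
    have "(c,a) \<in> P2 n" "b \<in> Q2 n c a" using t by (auto simp: T3_mem P2_mem Q2_def)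
    thus ?thesis using symvD(5)[OF s] by auto
  qed
  have e3: "(\<Sum>((a,b),c)\<in>T3 n. x [c,a,b]) = (\<Sum>t\<in>T3 n. B0)"
    using x5 by (intro sum.cong) auto
  show "(\<Sum>(a,b)\<in>P2 n. x [a,b,b]) + (\<Sum>(a,b)\<in>P2 n. x [b,a,b]) + (\<Sum>((a,b),c)\<in>T3 n. x [c,a,b])
      = 8*real n*(real n-1)^2*B0"
    unfolding e1 e2 e3 sum_constant cP2 cT3 by algebra
qed


definition fv :: "real \<Rightarrow> real \<Rightarrow> real" where "fv u v = (1 - u) / u * ((1 - v) / v)"

lemma frel_fv: "frel r x = fv (x (fst r)) (sum x (snd r))"
  by (simp add: frel_def fv_def Let_def)

lemma frel_sym:
  assumes n: "n \<ge> 2" and x: "x \<in> Delta n" and s: "symv n x A0 B0 C0" and r: "r \<in> RG n"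
  defines "s2v \<equiv> (2*real n-2)*B0 + C0"
  defines "s1v \<equiv> A0 + (2*real n-2)*s2v"
  shows "frel r x \<in> {fv A0 (1 - s1v), fv A0 (1 - B0), fv B0 (1 - A0), fv B0 (1 - s2v), fv C0 (1 - s2v), fv C0 s1v}"
proof -
  have LL: "(i,t) \<in> L n \<longleftrightarrow> i \<in> {1..n} \<and> t \<in> Sg" for i t by (simp add: L_def)
  have PP2: "((i,t),(j,s)) \<in> P2 n \<longleftrightarrow> i \<in> {1..n} \<and> t \<in> Sg \<and> j \<in> {1..n} \<and> s \<in> Sg \<and> i \<noteq> j" for i t j s
    by (auto simp: P2_mem L_def)
  have S1v: "sum x (S1 n i t) = s1v" if "i \<in> {1..n}" "t \<in> Sg" for i t
    using symv_s1[OF n s, of "(i,t)"] that unfolding s1v_def s2v_def by (simp add: S1'_def LL)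
  have S1c: "sum x (Psi n - S1 n i t) = 1 - s1v" if "i \<in> {1..n}" "t \<in> Sg" for i t
    using S1v[OF that] S1'_sub[of n "(i,t)"] Delta_sum[OF x]
    by (simp add: sum_diff finite_Psi S1'_def)
  have S2c: "sum x (Psi n - S2 n i t j s) = 1 - s2v" if "((i,t),(j,s)) \<in> P2 n" for i t j s
    using symv_s2[OF n s that] S2'_sub[OF that] Delta_sum[OF x] unfolding s2v_def
    by (simp add: sum_diff finite_Psi S2'_def)
  have Wc: "sum x (Psi n - {w}) = 1 - x w" if "w \<in> Psi n" for w
    using that Delta_sum[OF x] by (simp add: sum_diff finite_Psi)
  have x1: "x [(i,t),(i,t)] = A0" if "i \<in> {1..n}" "t \<in> Sg" for i t
    using symvD(1)[OF s, of "(i,t)"] that by (simp add: LL)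
  have x2: "x [(i,t),(j,s),(j,s)] = B0" if "((i,t),(j,s)) \<in> P2 n" for i t j s
    using symvD(2)[OF s that] .
  have x3: "x [(i,t),(j,s),(i,t)] = B0" if "((i,t),(j,s)) \<in> P2 n" for i t j s
    using symvD(3)[OF s that] .
  have x4: "x [(i,t),(j,s),(i,-t)] = C0" if "((i,t),(j,s)) \<in> P2 n" for i t j s
    using symvD(4)[OF s that] by (simp add: linv_def)
  have x5: "x [(i,t),(j,s),(k,p)] = B0" if "((i,t),(j,s)) \<in> P2 n" "k \<in> {1..n}" "p \<in> Sg" "k \<noteq> i" "k \<noteq> j" for i t j s k p
    using symvD(5)[OF s that(1), of "(k,p)"] that by (simp add: Q2_def LL)
  have W1'': "[(i,t),(i,t)] \<in> Psi n" if "i \<in> {1..n}" "t \<in> Sg" for i t using W1[of "(i,t)" n] that by (simp add: LL)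
  have W3'': "[(i,t),(j,s),(i,t)] \<in> Psi n" if "((i,t),(j,s)) \<in> P2 n" for i t j s
    using W3[OF that, of "(i,t)"] that by (simp add: PP2 LL)
  show ?thesis using r unfolding RG_def
  proof (elim UnE)
    assume "r \<in> R1a n"
    then obtain i t where "r = ([(i,t),(i,t)], Psi n - S1 n i t)" "i \<in> {1..n}" "t \<in> Sg" unfolding R1a_def by blast
    thus ?thesis using x1 S1c by (simp add: frel_fv)
  next
    assume "r \<in> R1b n"
    then obtain i t j s where "r = ([(i,t),(i,t)], Psi n - {[(i,t),(j,s),(i,t)]})" "((i,t),(j,s)) \<in> P2 n"
      unfolding R1b_def PP2 by blast
    thus ?thesis using x1 x3 Wc W3'' by (simp add: frel_fv PP2)
  next
    assume "r \<in> R2a n"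
    then obtain i t j s where "r = ([(i,t),(j,s),(j,s)], Psi n - {[(j,s),(j,s)]})" "((i,t),(j,s)) \<in> P2 n"
      unfolding R2a_def PP2 by blast
    thus ?thesis using x1 x2 Wc W1'' by (simp add: frel_fv PP2)
  next
    assume "r \<in> R2b n"
    then obtain i t j s where "r = ([(i,t),(j,s),(j,s)], Psi n - S2 n i t j s)" "((i,t),(j,s)) \<in> P2 n"
      unfolding R2b_def PP2 by blast
    thus ?thesis using x2 S2c by (simp add: frel_fv)
  next
    assume "r \<in> R3a n"
    then obtain i t j s where "r = ([(i,t),(j,s),(i,t)], Psi n - S2 n j s i t)" "((i,t),(j,s)) \<in> P2 n"
      unfolding R3a_def PP2 by blast
    moreover hence "((j,s),(i,t)) \<in> P2 n" by (auto simp: PP2)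
    ultimately show ?thesis using x3 S2c by (simp add: frel_fv)
  next
    assume "r \<in> R3b n"
    then obtain i t j s where "r = ([(i,t),(j,s),(i,t)], Psi n - {[(i,t),(i,t)]})" "((i,t),(j,s)) \<in> P2 n"
      unfolding R3b_def PP2 by blast
    thus ?thesis using x1 x3 Wc W1'' by (simp add: frel_fv PP2)
  next
    assume "r \<in> R4a n"
    then obtain i t j s where "r = ([(i,t),(j,s),(i,-t)], Psi n - S2 n j s i (-t))" "((i,t),(j,s)) \<in> P2 n"
      unfolding R4a_def PP2 by blast
    moreover hence "((j,s),(i,-t)) \<in> P2 n" by (auto simp: PP2 Sg_def)
    ultimately show ?thesis using x4 S2c by (simp add: frel_fv)
  next
    assume "r \<in> R4b n"
    then obtain i t j s where "r = ([(i,t),(j,s),(i,-t)], S1 n i t)" "((i,t),(j,s)) \<in> P2 n"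
      unfolding R4b_def PP2 by blast
    thus ?thesis using x4 S1v by (simp add: frel_fv PP2)
  next
    assume "r \<in> R5a n"
    then obtain i t j s k p where "r = ([(i,t),(j,s),(k,p)], Psi n - S2 n j s k p)" "((i,t),(j,s)) \<in> P2 n"
      "k \<in> {1..n}" "p \<in> Sg" "k \<noteq> i" "k \<noteq> j"
      unfolding R5a_def PP2 by blast
    moreover hence "((j,s),(k,p)) \<in> P2 n" by (auto simp: PP2)
    ultimately show ?thesis using x5 S2c by (simp add: frel_fv)
  next
    assume "r \<in> R5b n"
    then obtain i t j s k p where "r = ([(i,t),(j,s),(k,p)], Psi n - S2 n i t k p)" "((i,t),(j,s)) \<in> P2 n"
      "k \<in> {1..n}" "p \<in> Sg" "k \<noteq> i" "k \<noteq> j"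
      unfolding R5b_def PP2 by blast
    moreover hence "((i,t),(k,p)) \<in> P2 n" by (auto simp: PP2)
    ultimately show ?thesis using x5 S2c by (simp add: frel_fv)
  qed
qed


lemma opt_vals:
  fixes n l :: real
  assumes n: "n \<ge> 2" and l: "l > (2*n-1)^2" and P: "PP n l = 0"
  defines "a \<equiv> as n l" and "b \<equiv> bs n l" and "c \<equiv> cs n l"
  defines "S \<equiv> (2*n-2)*b + c"
  defines "s1 \<equiv> a + (2*n-2)*S"
  shows "fv a (1 - s1) \<le> l" "fv a (1 - b) \<le> l" "fv b (1 - a) \<le> l" "fv b (1 - S) \<le> l"
    "fv c (1 - S) \<le> l" "fv c s1 \<le> l" "s1 = 1/(2*n)"
proof -
  note rf = root_facts[OF n l P, folded a_def b_def c_def]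
  define N where "N = 2*n-1"
  have N3: "N \<ge> 3" using n N_def by simp
  have l9: "l > 9" using rf by simp
  have a0: "a > 0" "a < 1" "c > 0" "c < 1" "b > 0" using rf by auto
  have Nl: "N*l+1 > 0" using N3 l9 by (smt (verit) mult_pos_pos)
  have aeq: "a * (N*l+1) = 1" using Nl unfolding a_def as_def N_def by simp
  have ceq: "c * (N+l) = N" using N3 l9 unfolding c_def cs_def N_def by simp
  have ha: "(1 - a) / a = N * l"
  proof -
    have "1 - a = N * l * a" using aeq by (simp add: algebra_simps)
    thus ?thesis using a0 by simp
  qed
  have hc: "(1 - c) / c = l / N"
  proof -
    have "N * (1 - c) = l * c" using ceq by (simp add: algebra_simps)
    thus ?thesis using a0 N3 by (simp add: field_simps)
  qed
  have cons: "2*n*a + 8*n*(n-1)^2*b + 4*n*(n-1)*c = 1" using rf(7) .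
  have hs1: "2*n*s1 = 1"
  proof -
    have "2*n*s1 = 2*n*a + 8*n*(n-1)^2*b + 4*n*(n-1)*c" unfolding s1_def S_def by algebra
    thus ?thesis using cons by simp
  qed
  show s1: "s1 = 1/(2*n)" using hs1 n by (simp add: field_simps)
  have Eb: "(1 - b) * S = l * b * (1 - S)" using rf(8) S_def by simp
  have m8: "4*n*(n-1) \<ge> 8"
  proof -
    have "n*(n-1) \<ge> 2*1" using n by (intro mult_mono) auto
    thus ?thesis by simp
  qed
  have mS: "4*n*(n-1)*S = 1 - 2*n*a"
  proof -
    have "8*n*(n-1)^2*b + 4*n*(n-1)*c = 4*n*(n-1)*S" unfolding S_def by algebra
    thus ?thesis using cons by linarith
  qed
  have S0: "S > 0" unfolding S_def using a0 n by (smt (verit) mult_nonneg_nonneg)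
  have S8: "S \<le> 1/8"
  proof -
    have "2*n*a > 0" using a0 n by simp
    hence "4*n*(n-1)*S < 1" using mS by linarith
    moreover have "8*S \<le> 4*n*(n-1)*S" using m8 S0 by (intro mult_right_mono) auto
    ultimately show ?thesis by linarith
  qed
  have hb: "(1 - b) / b = l * (1 - S) / S" using Eb a0 S0 S8 by (simp add: field_simps)
  have Sc: "S \<ge> c" unfolding S_def using a0 n by (smt (verit) mult_nonneg_nonneg)
  show "fv a (1 - s1) \<le> l"
  proof -
    have "fv a (1 - s1) = N * l * (s1 / (1 - s1))" unfolding fv_def using ha by simp
    also have "s1 / (1 - s1) = 1 / N" unfolding s1 N_def using n by (simp add: field_simps)
    finally show ?thesis using N3 by simp
  qed
  show "fv a (1 - b) \<le> l"
  proof -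
    have "8*n*(n-1)^2*b \<le> 1"
    proof -
      have "2*n*a > 0" "4*n*(n-1)*c > 0" using a0 n by auto
      thus ?thesis using cons by linarith
    qed
    moreover have "2*n*b \<le> 8*n*(n-1)^2*b"
    proof -
      have "(n-1)^2 \<ge> 1" using n by (simp add: one_le_power)
      hence "8*n*1 \<le> 8*n*(n-1)^2" using n by (intro mult_left_mono) auto
      hence "2*n*1 \<le> 8*n*(n-1)^2" using n by linarith
      thus ?thesis using a0 by (intro mult_right_mono) auto
    qed
    ultimately have "2*n*b \<le> 1" by linarith
    hence bb: "N * b \<le> 1 - b" unfolding N_def by (simp add: algebra_simps)
    have b1: "1 - b > 0" using bb N3 a0 by (smt (verit) mult_pos_pos)
    have "fv a (1 - b) = N * l * (b / (1 - b))" unfolding fv_def using ha by simp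
    also have "\<dots> = l * (N * b / (1 - b))" by simp
    also have "\<dots> \<le> l * 1"
      using bb b1 l9 by (intro mult_left_mono) (auto simp: divide_le_eq)
    finally show ?thesis by simp
  qed
  show "fv b (1 - a) \<le> l"
  proof -
    have "fv b (1 - a) = l * (1 - S) / S * (a / (1 - a))" unfolding fv_def using hb by simp
    also have "a / (1 - a) = 1 / (N * l)"
    proof -
      have "1 - a = N * l * a" using aeq by (simp add: algebra_simps)
      thus ?thesis using a0 by simp
    qed
    also have "l * (1 - S) / S * (1 / (N * l)) = (1 - S) / (S * N)" using l9 S0 N3 by (simp add: field_simps)
    also have "\<dots> \<le> l"
    proof -
      have "c * (N*l+1) \<ge> 1"
      proof -
        have "N * (N*l+1) \<ge> N + l"
        proof -
          have "N*N*l \<ge> 1*1*l" using N3 l9 by (intro mult_mono) auto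
          thus ?thesis by (simp add: algebra_simps)
        qed
        hence "N * (N*l+1) / (N+l) \<ge> 1" using N3 l9 by (simp add: le_divide_eq)
        moreover have "c = N / (N+l)" using ceq N3 l9 by (simp add: field_simps)
        ultimately show ?thesis by simp
      qed
      hence "S * (N*l+1) \<ge> 1" using Sc Nl by (smt (verit) mult_right_mono)
      hence "1 - S \<le> l * (S * N)" by (simp add: algebra_simps)
      thus ?thesis using S0 N3 by (simp add: divide_le_eq)
    qed
    finally show ?thesis .
  qed
  show "fv b (1 - S) \<le> l"
  proof -
    have "fv b (1 - S) = l * (1 - S) / S * (S / (1 - S))" unfolding fv_def using hb by simp
    also have "\<dots> = l" using S0 S8 by (simp add: field_simps)
    finally show ?thesis by simp
  qed
  show "fv c (1 - S) \<le> l"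
  proof -
    have "fv c (1 - S) = l / N * (S / (1 - S))" unfolding fv_def using hc by simp
    also have "\<dots> \<le> l / N * N"
    proof (intro mult_left_mono)
      have "N*S \<le> N*(1/8)" using S8 N3 by (intro mult_left_mono) auto
      moreover have "N*(1-S) = N - N*S" by (simp add: algebra_simps)
      ultimately have "S \<le> N * (1 - S)" using S8 N3 by linarith
      thus "S / (1 - S) \<le> N" using S8 by (simp add: divide_le_eq)
      show "0 \<le> l / N" using l9 N3 by simp
    qed
    also have "\<dots> = l" using N3 by simp
    finally show ?thesis .
  qed
  show "fv c s1 \<le> l"
  proof -
    have "fv c s1 = l / N * ((1 - s1) / s1)" unfolding fv_def using hc by simp
    also have "(1 - s1) / s1 = N" unfolding s1 N_def using n by (simp add: field_simps)
    finally show ?thesis using N3 by simp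
  qed
qed


definition xst :: "nat \<Rightarrow> real \<Rightarrow> word \<Rightarrow> real" where
  "xst n l w = (if w \<in> Psi n then (if type1 n w then as (real n) l else if type4 n w then cs (real n) l
     else bs (real n) l) else 0)"

lemma xst_symv: "symv n (xst n l) (as (real n) l) (bs (real n) l) (cs (real n) l)"
  unfolding symv_def
proof (intro conjI ballI allI impI)
  fix a assume "a \<in> L n"
  thus "xst n l [a,a] = as (real n) l" using W1 ty1 by (simp add: xst_def)
next
  fix a b assume p: "(a,b) \<in> P2 n"
  have aL: "a \<in> L n" and bL: "b \<in> L n" and ab: "fst a \<noteq> fst b" using p by (auto simp: P2_mem)
  show "xst n l [a,b,b] = bs (real n) l" using W2[OF p] nty1 nty4_2[OF p] by (simp add: xst_def)
  show "xst n l [a,b,a] = bs (real n) l" using W3[OF p aL] ab nty1 nty4_3[OF p] by (simp add: xst_def)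
  show "xst n l [a,b,linv a] = cs (real n) l"
    using W3[OF p linv_simps(2)[OF aL]] ab nty1 ty4[OF p] by (simp add: xst_def linv_simps(1))
  fix c assume c: "c \<in> Q2 n a b"
  hence "c \<in> L n" "fst c \<noteq> fst b" by (auto simp: Q2_def)
  thus "xst n l [a,b,c] = bs (real n) l" using W3[OF p] nty1 nty4_5[OF c] by (simp add: xst_def)
qed

lemma xst_Delta:
  assumes n: "n \<ge> 2" and l: "l > (2*real n-1)^2" and P: "PP (real n) l = 0"
  shows "xst n l \<in> Delta n"
proof -
  have rn: "real n \<ge> 2" using n by simp
  note rf = root_facts[OF rn l P]
  have pos: "xst n l w > 0" if "w \<in> Psi n" for w using that rf by (simp add: xst_def)
  have "sum (xst n l) (Psi n) = 1" using symv_total[OF n xst_symv] rf(7) by simp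
  thus ?thesis unfolding Delta_def using pos by (auto simp: xst_def)
qed

lemma RF_ne: "n \<ge> 1 \<Longrightarrow> RF n \<noteq> {}"
  using rel1a[of "(1,1)" n] by (auto simp: L_def Sg_def)

lemma F_le_G: "n \<ge> 1 \<Longrightarrow> Ffun n x \<le> Gfun n x"
  unfolding Ffun_def Gfun_def
  by (rule Max_mono) (use RF_ne RF_sub_RG finite_RG in auto)

lemma G_xst:
  assumes n: "n \<ge> 2" and l: "l > (2*real n-1)^2" and P: "PP (real n) l = 0"
  shows "Gfun n (xst n l) \<le> l"
proof -
  have rn: "real n \<ge> 2" using n by simp
  note ov = opt_vals[OF rn l P]
  have x: "xst n l \<in> Delta n" by (rule xst_Delta[OF n l P])
  have "RG n \<noteq> {}" using RF_ne[of n] RF_sub_RG[of n] n by auto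
  moreover have "frel r (xst n l) \<le> l" if r: "r \<in> RG n" for r
    using frel_sym[OF n x xst_symv r] ov by auto
  ultimately show ?thesis unfolding Gfun_def using finite_RG
    by (subst Max_le_iff) auto
qed

lemma F_lower:
  assumes n: "n \<ge> 2" and l: "l > (2*real n-1)^2" and P: "PP (real n) l = 0" and x: "x \<in> Delta n"
  shows "Ffun n x \<ge> l"
proof (rule ccontr)
  assume "\<not> Ffun n x \<ge> l"
  hence Fl: "Ffun n x < l" by simp
  have rn: "real n \<ge> 2" using n by simp
  have l9: "l > 9" using root_facts[OF rn l P] by simp
  define \<beta> where "\<beta> = max (Ffun n x) 2"
  have b1: "\<beta> \<ge> 1" unfolding \<beta>_def by simp
  have bl: "\<beta> < l" unfolding \<beta>_def using Fl l9 by simp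
  have F: "frel r x \<le> \<beta>" if "r \<in> RF n" for r
    using frel_le_F[OF that, of x] unfolding \<beta>_def by simp
  note J = jensen_main[OF n x b1 F]
  obtain A B C where h: "A > 0" "B > 0" "C > 0"
    "2*real n*A + 8*real n*(real n-1)^2*B + 4*real n*(real n-1)*C = 1"
    "1 - A \<le> \<beta> * A * (2*real n-1)" "(1 - C) * (2*real n-1) \<le> \<beta> * C"
    "(1 - B) * ((2*real n-2)*B + C) \<le> \<beta> * B * (1 - ((2*real n-2)*B + C))"
    using J by blast
  have "\<beta> = l" using scalar_main[OF rn l P h] bl by simp
  thus False using bl by simp
qed

lemma INF_vals:
  assumes n: "n \<ge> 2" and l: "l > (2*real n-1)^2" and P: "PP (real n) l = 0"
  shows "(INF x\<in>Delta n. Ffun n x) = l" "(INF x\<in>Delta n. Gfun n x) = l"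
proof -
  have x: "xst n l \<in> Delta n" by (rule xst_Delta[OF n l P])
  have G: "Gfun n (xst n l) = l" using G_xst[OF n l P] F_lower[OF n l P x] F_le_G[of n "xst n l"] n by simp
  have F: "Ffun n (xst n l) = l" using G_xst[OF n l P] F_lower[OF n l P x] F_le_G[of n "xst n l"] n by simp
  have iF: "l \<in> Ffun n ` Delta n" using x F by (metis image_eqI)
  have iG: "l \<in> Gfun n ` Delta n" using x G by (metis image_eqI)
  show "(INF x\<in>Delta n. Ffun n x) = l"
    by (rule cInf_eq_minimum) (use iF F_lower[OF n l P] in auto)
  have "l \<le> Gfun n y" if "y \<in> Delta n" for y
    using F_lower[OF n l P that] F_le_G[of n y] n by simp
  thus "(INF x\<in>Delta n. Gfun n x) = l"
    by (intro cInf_eq_minimum) (use iG in auto)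
qed

lemma alpha_root:
  assumes n: "n \<ge> 2"
  shows "alpha n > (2*real n-1)^2 \<and> PP (real n) (alpha n) = 0"
proof -
  have rn: "real n \<ge> 2" using n by simp
  obtain l0 where l0: "l0 > (2*real n-1)^2" "PP (real n) l0 = 0" using root_exists[OF rn] by blast
  have ex1: "\<exists>!l. l > (2 * real n - 1)^2 \<and> Ppoly n l = 0"
  proof (rule ex1I[of _ l0])
    show "l0 > (2 * real n - 1)^2 \<and> Ppoly n l0 = 0" using l0 by (simp add: Ppoly_PP)
    fix l assume "l > (2 * real n - 1)^2 \<and> Ppoly n l = 0"
    hence lp: "l > (2 * real n - 1)^2" "PP (real n) l = 0" by (auto simp: Ppoly_PP)
    show "l = l0" using INF_vals(1)[OF n lp] INF_vals(1)[OF n l0] by simp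
  qed
  have "alpha n > (2 * real n - 1)^2 \<and> Ppoly n (alpha n) = 0"
    unfolding alpha_def by (rule theI'[OF ex1])
  thus ?thesis by (simp add: Ppoly_PP)
qed


theorem theorem5p10:
  fixes n :: nat and xs :: "word \<Rightarrow> real" and a b c :: real
  assumes n2: "n \<ge> 2"
    and xs_Delta: "xs \<in> Delta n"
    and xs_min: "Ffun n xs = (INF x\<in>Delta n. Ffun n x)"
    and abc: "a \<in> {0<..<1}" "b \<in> {0<..<1}" "c \<in> {0<..<1}"
    and t1: "\<And>\<psi>. type1 n \<psi> \<Longrightarrow> xs \<psi> = a"
    and t235: "\<And>\<psi>. type2 n \<psi> \<or> type3 n \<psi> \<or> type5 n \<psi> \<Longrightarrow> xs \<psi> = b"
    and t4: "\<And>\<psi>. type4 n \<psi> \<Longrightarrow> xs \<psi> = c"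
  shows "a = 1 / ((2 * real n - 1) * alpha n + 1)
       \<and> b = (2 * real n - 1) * (alpha n - 1) /
             ((4 * real n ^ 2 - 4 * real n - 1) * (2 * real n - 1) * (alpha n)^2
              + 2 * (2 * real n ^ 2 - 1) * alpha n - (2 * real n - 1))
       \<and> c = (2 * real n - 1) / (2 * real n - 1 + alpha n)
       \<and> (INF x\<in>Delta n. Ffun n x) = alpha n
       \<and> (INF x\<in>Delta n. Gfun n x) = alpha n"
proof -
  define l where "l = alpha n"
  have rn: "real n \<ge> 2" using n2 by simp
  have lr: "l > (2*real n-1)^2" "PP (real n) l = 0" using alpha_root[OF n2] l_def by auto
  have l9: "l > 9" using root_facts[OF rn lr] by simp
  note IV = INF_vals[OF n2 lr]
  have Fxs: "Ffun n xs = l" using xs_min IV(1) by simp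
  have sy: "symv n xs a b c"
    unfolding symv_def
  proof (intro conjI ballI allI impI)
    fix a' assume "a' \<in> L n" thus "xs [a',a'] = a" using t1 ty1 by blast
  next
    fix a' b' assume p: "(a',b') \<in> P2 n"
    show "xs [a',b',b'] = b" using t235 ty2[OF p] by blast
    show "xs [a',b',a'] = b" using t235 ty3[OF p] by blast
    show "xs [a',b',linv a'] = c" using t4 ty4[OF p] by blast
    fix c' assume "c' \<in> Q2 n a' b'"
    thus "xs [a',b',c'] = b" using t235 ty5[OF p] by blast
  qed
  have b1: "l \<ge> 1" using l9 by simp
  have F: "frel r xs \<le> l" if "r \<in> RF n" for r using frel_le_F[OF that, of xs] Fxs by simp
  note J = jensen_main[OF n2 xs_Delta b1 F, unfolded symv_T[OF n2 sy]]
  have nz: "2 * real n \<noteq> 0" "8 * real n * (real n - 1)^2 \<noteq> 0" "4 * real n * (real n - 1) \<noteq> 0"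
    using rn by auto
  have J': "a > 0 \<and> b > 0 \<and> c > 0 \<and> 2*real n*a + 8*real n*(real n-1)^2*b + 4*real n*(real n-1)*c = 1
    \<and> 1 - a \<le> l * a * (2*real n-1) \<and> (1 - c) * (2*real n-1) \<le> l * c
    \<and> (1 - b) * ((2*real n-2)*b + c) \<le> l * b * (1 - ((2*real n-2)*b + c))"
  proof -
    have e1: "2 * real n * a / (2 * real n) = a" using nz by simp
    have e2: "8 * real n * (real n - 1)^2 * b / (8 * real n * (real n - 1)^2) = b" using nz by simp
    have e3: "4 * real n * (real n - 1) * c / (4 * real n * (real n - 1)) = c" using nz by simp
    show ?thesis using J unfolding e1 e2 e3 by blast
  qed
  have abc_eq: "a = as (real n) l \<and> b = bs (real n) l \<and> c = cs (real n) l \<and> l = l"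
    using J' by (intro scalar_main[OF rn lr]) auto
  show ?thesis using abc_eq IV unfolding l_def as_def bs_def cs_def Dd_def by simp
qed


end
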